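(* Let $A$ be a nontrivial closed class of decision tables from $\mathcal M_2^\infty$, $\psi$ a bounded complexity measure, suppose $\mathcal H^\infty_{\psi,A}$ is everywhere defined, and let $n\in\omega\setminus\{0\}$. Then $Z_{\psi,A}(n)$, $G_{\psi,A}(n)$, $L_{\psi,A}(n)$ are defined and $$\mathcal H^\infty_{\psi,A}(n)\le\max\bigl(n,\,nG_{\psi,A}(n)\bigr)\,Z_{\psi,A}(n)\,\log_2\bigl(4nL_{\psi,A}(n)\bigr).$$
   Context: Notation: $\omega=\{0,1,2,\dots\}$; $\mathcal P(\omega)$ is the set of nonempty finite subsets of $\omega$; $E_2=\{0,1\}$. $P=\{f_i:i\in\omega\}$ is a set of attributes, $f_i\neq f_j$ for $i\ne j$. Decision tables: $\mathcal M_2^\infty$ is the set of rectangular tables filled with numbers from $E_2$, whose columns are labeled with pairwise different attributes from $P$, whose rows are pairwise different, and each row of which is labeled with a set from $\mathcal P(\omega)$ (its set of decisions). The empty table (no rows) is denoted $\Lambda$ and belongs to $\mathcal M_2^\infty$. For $T\in\mathcal M_2^\infty$: $\Delta(T)$ is the set of rows; $\Pi(T)$ is the intersection of the decision sets of all rows (common decisions); $\mathrm{At}(T)$ is the set of attributes labeling columns; $N(T)$ is the number of rows. For nonempty $T$, $\Omega_2(T)$ is the set of finite words (including the empty word $\lambda$) over the alphabet $\{(f_i,\delta):f_i\in\mathrm{At}(T),\delta\in E_2\}$; for $\alpha=(f_{i_1},\delta_1)\cdots(f_{i_m},\delta_m)$, $T\alpha$ is the subtable of $T$ consisting of the rows having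 value $\delta_j$ in the column $f_{i_j}$ for all $j$, and $T\lambda=T$. Operations: for $D\subseteq\mathrm{At}(T)$, $I(D,T)$ is obtained from $T$ by deleting the columns labeled with attributes from $D$ and, in each group of rows coinciding on the remaining columns, keeping only the first row; $I(\mathrm{At}(T),T)=\Lambda$. For $\nu:E_2^{|\mathrm{At}(T)|}\to\mathcal P(\omega)$, $J(\nu,T)$ is obtained by replacing the decision set of each row $\bar\delta$ by $\nu(\bar\delta)$. $[T]=\{J(\nu,I(D,T)):D\subseteq\mathrm{At}(T),\ \nu:E_2^{|\mathrm{At}(T)\setminus D|}\to\mathcal P(\omega)\}$; for nonempty $A\subseteq\mathcal M_2^\infty$, $[A]=\bigcup_{T\in A}[T]$. $A$ is a closed class if $[A]=A$; nontrivial if it contains a nonempty table. Decision trees: a $2$-decision tree is a finite directed rooted tree with at least two nodes in which the root and the edges leaving the root are unlabeled, each terminal node is labeled with a decision from $\omega$, and each other node is labeled with an attribute from $P$, each edge leaving such a node being labeled with a number from $E_2$. $\mathrm{At}(\Gamma)$ is the set of attributes labeling nodes of $\Gamma$. For a complete path $\tau=v_1,d_1,\dots,v_m,d_m,v_{m+1}$ (from the root to a terminal node), $\pi(\tau)=\lambda$ if $m=1$, and otherwise $\pi(\tau)=(f_{i_2},\delta_2)\cdots(f_{i_m},\delta_m)$ where $v_j$ is labeled $f_{i_j}$ and $d_j$ is labeled $\delta_j$; $T(\tau)=T\pi(\tau)$. For $T\ne\Lambda$, a nondeterministic decision tree for $T$ is a $2$-decision tree $\Gamma$ with $\mathrm{At}(\Gamma)\subseteq\mathrm{At}(T)$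 such that every row of $T$ belongs to $T(\tau)$ for some complete path $\tau$, and for every complete path $\tau$ either $T(\tau)=\Lambda$ or the decision at the terminal node of $\tau$ belongs to $\Pi(T(\tau))$. A deterministic decision tree for $T$ is a nondeterministic decision tree for $T$ in which, additionally, exactly one edge leaves the root and the edges leaving any node that is neither the root nor terminal are labeled with pairwise different numbers. Complexity measures: a partially bounded complexity measure is a function $\psi:P^*\to\omega$ on finite words over $P$ such that for all words $\alpha_1,\alpha_2$: $\psi(\alpha_1)=0$ iff $\alpha_1=\lambda$; $\psi(\alpha_1)$ is invariant under permutation of letters; $\psi(\alpha_1)\le\psi(\alpha_1\alpha_2)$; $\psi(\alpha_1\alpha_2)\le\psi(\alpha_1)+\psi(\alpha_2)$. It is bounded if in addition $\psi(\alpha)\ge|\alpha|$ for all $\alpha$. $\psi$ is extended to words $(f_{i_1},\delta_1)\cdots(f_{i_m},\delta_m)$ by $\psi(f_{i_1}\cdots f_{i_m})$ ($\psi(\lambda)=0$). For a $2$-decision tree $\Gamma$, $\psi(\Gamma)=\max_\tau\psi(\pi(\tau))$ over complete paths. For $T\ne\Lambda$, $\psi^d(T)$ (resp. $\psi^a(T)$) is the minimum of $\psi(\Gamma)$ over deterministic (resp. nondeterministic) decision trees $\Gamma$ for $T$; $\psi^d(\Lambda)=\psi^a(\Lambda)=0$. Parameters: $m_\psi(T)=\max\{\psi(f_i):f_i\in\mathrm{At}(T)\}$, $m_\psi(\Lambda)=0$. A table $Q\in\mathcal M_2^\infty$ is complete if $N(Q)=2^{|\mathrm{At}(Q)|}$;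 $Z(T)$ is the maximum number of columns of a complete table in $[T]$ if such tables exist, and $0$ otherwise; $Z(\Lambda)=0$. A word $\alpha\in\Omega_2(T)$ is annihilating for $T$ if $T\alpha=\Lambda$ and $\alpha$ contains no two letters $(f_i,\delta),(f_i,\sigma)$ with $\delta\ne\sigma$; it is irreducible if no word obtained from $\alpha$ by deleting some (at least one) letters is annihilating; $G(T)$ is the maximum length of an irreducible annihilating word for $T$ if one exists, and $0$ otherwise; $G(\Lambda)=0$. For $T\ne\Lambda$, $n\in\omega$: $\Omega_2^n(T)=\{\alpha\in\Omega_2(T):\psi(\alpha)\le n\}$; a finite $U\subseteq\Omega_2^n(T)$ is a $(\psi,n)$-cover of $T$ if $\bigcup_{\alpha\in U}\Delta(T\alpha)=\Delta(T)$, irreducible if no proper subset is a $(\psi,n)$-cover; $l_\psi(T,n)$ is the maximum cardinality of an irreducible $(\psi,n)$-cover of $T$; $l_\psi(\Lambda,n)=0$. Class functions ($n\in\omega$): $A_\psi(n)=\{T\in A:m_\psi(T)\le n\}$. $Z_{\psi,A}(n)$ is undefined if $\{Z(T):T\in A_\psi(n)\}$ is infinite, else its maximum; $G_{\psi,A}(n)$ is undefined if $\{G(T):T\in A_\psi(n)\}$ is infinite, else its maximum; $L_{\psi,A}(n)$ is undefined if $\{l_\psi(T,n):T\in A\}$ is infinite, else its maximum; $\mathcal H^\infty_{\psi,A}(n)$ is undefined if $\{\psi^d(T):T\in A,\psi^a(T)\le n\}$ is infinite, else its maximum. *)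

theory Defs
  imports Complex_Main "HOL-Library.Multiset"
begin

text \<open>Attribute f_i is represented by its index i :: nat; the value set E_2 = {0,1}
  is represented by bool (False = 0, True = 1). A table is the list of its column
  attributes (left to right) together with the list of its rows (top to bottom),
  each row being a tuple of values with its decision set.\<close>

type_synonym row = "bool list"
type_synonym dtable = "nat list \<times> (row \<times> nat set) list"

definition wf_table :: "dtable \<Rightarrow> bool" where
  "wf_table T \<longleftrightarrow> distinct (fst T) \<and> distinct (map fst (snd T))
     \<and> (\<forall>(r, D) \<in> set (snd T). length r = length (fst T) \<and> D \<noteq> {} \<and> finite D)
     \<and> (snd T = [] \<longrightarrow> fst T = [])"

definition Lam :: dtable where "Lam = ([], [])"

definition is_empty :: "dtable \<Rightarrow> bool" where "is_empty T \<longleftrightarrow> snd T = []"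

definition atts :: "dtable \<Rightarrow> nat set" where "atts T = set (fst T)"

definition Delta :: "dtable \<Rightarrow> row set" where "Delta T = set (map fst (snd T))"

definition PiT :: "dtable \<Rightarrow> nat set" where "PiT T = \<Inter> (set (map snd (snd T)))"

definition Nrows :: "dtable \<Rightarrow> nat" where "Nrows T = length (snd T)"

definition val :: "nat list \<Rightarrow> row \<Rightarrow> nat \<Rightarrow> bool" where
  "val cs r f = the (map_of (zip cs r) f)"

definition sub :: "dtable \<Rightarrow> (nat \<times> bool) list \<Rightarrow> dtable" where
  "sub T \<alpha> = (fst T, filter (\<lambda>(r, _). \<forall>(f, \<delta>) \<in> set \<alpha>. val (fst T) r f = \<delta>) (snd T))"

definition words :: "dtable \<Rightarrow> (nat \<times> bool) list set" where
  "words T = {\<alpha>. set (map fst \<alpha>) \<subseteq> atts T}"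

definition I_op :: "nat set \<Rightarrow> dtable \<Rightarrow> dtable" where
  "I_op D T = (if atts T \<subseteq> D then Lam else
     (let cs = fst T;
          keep = filter (\<lambda>i. cs ! i \<notin> D) [0..<length cs];
          proj = (\<lambda>r. map (\<lambda>i. r ! i) keep);
          keys = rev (remdups (rev (map (proj \<circ> fst) (snd T))))
      in (map (\<lambda>i. cs ! i) keep,
          map (\<lambda>k. (k, snd (hd (filter (\<lambda>x. proj (fst x) = k) (snd T))))) keys)))"

definition J_op :: "(row \<Rightarrow> nat set) \<Rightarrow> dtable \<Rightarrow> dtable" where
  "J_op \<nu> T = (fst T, map (\<lambda>x. (fst x, \<nu> (fst x))) (snd T))"

definition tclosure :: "dtable \<Rightarrow> dtable set" where
  "tclosure T = {J_op \<nu> (I_op D T) | D \<nu>. D \<subseteq> atts T \<and>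
      (\<forall>r. length r = card (atts T - D) \<longrightarrow> \<nu> r \<noteq> {} \<and> finite (\<nu> r))}"

definition cclosure :: "dtable set \<Rightarrow> dtable set" where
  "cclosure A = (\<Union>T\<in>A. tclosure T)"

definition closed_class :: "dtable set \<Rightarrow> bool" where
  "closed_class A \<longleftrightarrow> A \<noteq> {} \<and> A \<subseteq> {T. wf_table T} \<and> cclosure A = A"

definition nontrivial :: "dtable set \<Rightarrow> bool" where
  "nontrivial A \<longleftrightarrow> (\<exists>T\<in>A. \<not> is_empty T)"

text \<open>A 2-decision tree is represented by the (nonempty) list of subtrees hanging below
  the unlabeled root.\<close>

datatype dtree = Leaf nat | Node nat "(bool \<times> dtree) list"

inductive wf_dt :: "dtree \<Rightarrow> bool" where
  "wf_dt (Leaf d)"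
| "ch \<noteq> [] \<Longrightarrow> (\<And>p. p \<in> set ch \<Longrightarrow> wf_dt (snd p)) \<Longrightarrow> wf_dt (Node f ch)"

inductive det_dt :: "dtree \<Rightarrow> bool" where
  "det_dt (Leaf d)"
| "distinct (map fst ch) \<Longrightarrow> (\<And>p. p \<in> set ch \<Longrightarrow> det_dt (snd p)) \<Longrightarrow> det_dt (Node f ch)"

inductive dpath :: "dtree \<Rightarrow> (nat \<times> bool) list \<Rightarrow> nat \<Rightarrow> bool" where
  "dpath (Leaf d) [] d"
| "(\<delta>, t) \<in> set ch \<Longrightarrow> dpath t w d \<Longrightarrow> dpath (Node f ch) ((f, \<delta>) # w) d"

inductive att_in :: "dtree \<Rightarrow> nat \<Rightarrow> bool" where
  "att_in (Node f ch) f"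
| "p \<in> set ch \<Longrightarrow> att_in (snd p) g \<Longrightarrow> att_in (Node f ch) g"

definition tree_atts :: "dtree list \<Rightarrow> nat set" where
  "tree_atts \<Gamma> = {f. \<exists>t\<in>set \<Gamma>. att_in t f}"

definition cpath :: "dtree list \<Rightarrow> (nat \<times> bool) list \<Rightarrow> nat \<Rightarrow> bool" where
  "cpath \<Gamma> w d \<longleftrightarrow> (\<exists>t\<in>set \<Gamma>. dpath t w d)"

definition two_tree :: "dtree list \<Rightarrow> bool" where
  "two_tree \<Gamma> \<longleftrightarrow> \<Gamma> \<noteq> [] \<and> (\<forall>t\<in>set \<Gamma>. wf_dt t)"

definition nd_tree :: "dtable \<Rightarrow> dtree list \<Rightarrow> bool" where
  "nd_tree T \<Gamma> \<longleftrightarrow> two_tree \<Gamma> \<and> tree_atts \<Gamma> \<subseteq> atts T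
     \<and> (\<forall>r\<in>Delta T. \<exists>w d. cpath \<Gamma> w d \<and> r \<in> Delta (sub T w))
     \<and> (\<forall>w d. cpath \<Gamma> w d \<longrightarrow> is_empty (sub T w) \<or> d \<in> PiT (sub T w))"

definition det_tree :: "dtable \<Rightarrow> dtree list \<Rightarrow> bool" where
  "det_tree T \<Gamma> \<longleftrightarrow> nd_tree T \<Gamma> \<and> length \<Gamma> = 1 \<and> (\<forall>t\<in>set \<Gamma>. det_dt t)"

definition partially_bounded_cm :: "(nat list \<Rightarrow> nat) \<Rightarrow> bool" where
  "partially_bounded_cm \<psi> \<longleftrightarrow>
     (\<forall>a. \<psi> a = 0 \<longleftrightarrow> a = [])
   \<and> (\<forall>a b. mset a = mset b \<longrightarrow> \<psi> a = \<psi> b)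
   \<and> (\<forall>a b. \<psi> a \<le> \<psi> (a @ b))
   \<and> (\<forall>a b. \<psi> (a @ b) \<le> \<psi> a + \<psi> b)"

definition bounded_cm :: "(nat list \<Rightarrow> nat) \<Rightarrow> bool" where
  "bounded_cm \<psi> \<longleftrightarrow> partially_bounded_cm \<psi> \<and> (\<forall>a. length a \<le> \<psi> a)"

definition psiw :: "(nat list \<Rightarrow> nat) \<Rightarrow> (nat \<times> bool) list \<Rightarrow> nat" where
  "psiw \<psi> \<alpha> = \<psi> (map fst \<alpha>)"

definition psi_tree :: "(nat list \<Rightarrow> nat) \<Rightarrow> dtree list \<Rightarrow> nat" where
  "psi_tree \<psi> \<Gamma> = Max {psiw \<psi> w | w d. cpath \<Gamma> w d}"

definition psi_d :: "(nat list \<Rightarrow> nat) \<Rightarrow> dtable \<Rightarrow> nat" where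
  "psi_d \<psi> T = (if is_empty T then 0 else Inf {psi_tree \<psi> \<Gamma> | \<Gamma>. det_tree T \<Gamma>})"

definition psi_a :: "(nat list \<Rightarrow> nat) \<Rightarrow> dtable \<Rightarrow> nat" where
  "psi_a \<psi> T = (if is_empty T then 0 else Inf {psi_tree \<psi> \<Gamma> | \<Gamma>. nd_tree T \<Gamma>})"

definition m_psi :: "(nat list \<Rightarrow> nat) \<Rightarrow> dtable \<Rightarrow> nat" where
  "m_psi \<psi> T = Max (insert 0 ((\<lambda>f. \<psi> [f]) ` atts T))"

definition complete_table :: "dtable \<Rightarrow> bool" where
  "complete_table Q \<longleftrightarrow> Nrows Q = 2 ^ card (atts Q)"

definition Zt :: "dtable \<Rightarrow> nat" where
  "Zt T = Max (insert 0 {card (atts Q) | Q. Q \<in> tclosure T \<and> complete_table Q})"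

definition annihilating :: "dtable \<Rightarrow> (nat \<times> bool) list \<Rightarrow> bool" where
  "annihilating T \<alpha> \<longleftrightarrow> \<alpha> \<in> words T \<and> is_empty (sub T \<alpha>)
     \<and> \<not> (\<exists>f \<delta> \<sigma>. (f, \<delta>) \<in> set \<alpha> \<and> (f, \<sigma>) \<in> set \<alpha> \<and> \<delta> \<noteq> \<sigma>)"

definition irr_annihilating :: "dtable \<Rightarrow> (nat \<times> bool) list \<Rightarrow> bool" where
  "irr_annihilating T \<alpha> \<longleftrightarrow> annihilating T \<alpha>
     \<and> \<not> (\<exists>I. I \<subset> {..<length \<alpha>} \<and> annihilating T (nths \<alpha> I))"

definition Gt :: "dtable \<Rightarrow> nat" where
  "Gt T = (if is_empty T then 0 else Max (insert 0 {length \<alpha> | \<alpha>. irr_annihilating T \<alpha>}))"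

definition psi_cover :: "(nat list \<Rightarrow> nat) \<Rightarrow> dtable \<Rightarrow> nat \<Rightarrow> (nat \<times> bool) list set \<Rightarrow> bool" where
  "psi_cover \<psi> T n U \<longleftrightarrow> finite U \<and> U \<subseteq> {\<alpha> \<in> words T. psiw \<psi> \<alpha> \<le> n}
     \<and> (\<Union>\<alpha>\<in>U. Delta (sub T \<alpha>)) = Delta T"

definition irr_psi_cover :: "(nat list \<Rightarrow> nat) \<Rightarrow> dtable \<Rightarrow> nat \<Rightarrow> (nat \<times> bool) list set \<Rightarrow> bool" where
  "irr_psi_cover \<psi> T n U \<longleftrightarrow> psi_cover \<psi> T n U \<and> (\<forall>V. V \<subset> U \<longrightarrow> \<not> psi_cover \<psi> T n V)"

definition l_psi :: "(nat list \<Rightarrow> nat) \<Rightarrow> dtable \<Rightarrow> nat \<Rightarrow> nat" where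
  "l_psi \<psi> T n = (if is_empty T then 0 else Max {card U | U. irr_psi_cover \<psi> T n U})"

section \<open>Class functions (None = undefined)\<close>

definition max_if_finite :: "nat set \<Rightarrow> nat option" where
  "max_if_finite S = (if finite S then Some (Max S) else None)"

definition A_psi :: "(nat list \<Rightarrow> nat) \<Rightarrow> dtable set \<Rightarrow> nat \<Rightarrow> dtable set" where
  "A_psi \<psi> A n = {T \<in> A. m_psi \<psi> T \<le> n}"

definition Z_class :: "(nat list \<Rightarrow> nat) \<Rightarrow> dtable set \<Rightarrow> nat \<Rightarrow> nat option" where
  "Z_class \<psi> A n = max_if_finite (Zt ` A_psi \<psi> A n)"

definition G_class :: "(nat list \<Rightarrow> nat) \<Rightarrow> dtable set \<Rightarrow> nat \<Rightarrow> nat option" where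
  "G_class \<psi> A n = max_if_finite (Gt ` A_psi \<psi> A n)"

definition L_class :: "(nat list \<Rightarrow> nat) \<Rightarrow> dtable set \<Rightarrow> nat \<Rightarrow> nat option" where
  "L_class \<psi> A n = max_if_finite ((\<lambda>T. l_psi \<psi> T n) ` A)"

definition H_class :: "(nat list \<Rightarrow> nat) \<Rightarrow> dtable set \<Rightarrow> nat \<Rightarrow> nat option" where
  "H_class \<psi> A n = max_if_finite (psi_d \<psi> ` {T \<in> A. psi_a \<psi> T \<le> n})"

end

theory Submission
  imports Defs
begin

definition sat :: "nat list \<Rightarrow> row \<Rightarrow> (nat \<times> bool) list \<Rightarrow> bool" where
  "sat cs r w \<longleftrightarrow> (\<forall>(f,\<delta>)\<in>set w. val cs r f = \<delta>)"

lemma sat_append[simp]: "sat cs r (a @ b) \<longleftrightarrow> sat cs r a \<and> sat cs r b"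
  by (auto simp: sat_def)

lemma sat_Cons[simp]: "sat cs r ((f,\<delta>) # b) \<longleftrightarrow> val cs r f = \<delta> \<and> sat cs r b"
  by (auto simp: sat_def)

lemma sat_Nil[simp]: "sat cs r []"
  by (auto simp: sat_def)

lemma fst_sub[simp]: "fst (sub T w) = fst T"
  by (simp add: sub_def)

lemma Delta_sub: "Delta (sub T w) = {r \<in> Delta T. sat (fst T) r w}"
  by (auto simp: Delta_def sub_def sat_def intro!: rev_image_eqI)

lemma is_empty_iff: "is_empty T \<longleftrightarrow> Delta T = {}"
  unfolding is_empty_def Delta_def by auto

lemma PiT_iff: "x \<in> PiT T \<longleftrightarrow> (\<forall>(r,D)\<in>set(snd T). x \<in> D)"
  unfolding PiT_def by auto

lemma PiT_sub: "x \<in> PiT (sub T w) \<longleftrightarrow> (\<forall>(r,D)\<in>set(snd T). sat (fst T) r w \<longrightarrow> x \<in> D)"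
  by (auto simp: PiT_def sub_def sat_def)

lemma PiT_sub_mono:
  assumes "\<And>r. r \<in> Delta T \<Longrightarrow> sat (fst T) r w1 \<Longrightarrow> sat (fst T) r w2"
    and "x \<in> PiT (sub T w2)"
  shows "x \<in> PiT (sub T w1)"
  using assms unfolding PiT_sub Delta_def by fastforce

lemma sub_append: "sub (sub T a) b = sub T (a @ b)"
  by (simp add: sub_def sat_def; rule filter_cong; auto)

definition keepD :: "nat list \<Rightarrow> nat set \<Rightarrow> nat list" where
  "keepD cs D = filter (\<lambda>i. cs ! i \<notin> D) [0..<length cs]"

definition projD :: "nat list \<Rightarrow> nat set \<Rightarrow> row \<Rightarrow> row" where
  "projD cs D r = map (\<lambda>i. r ! i) (keepD cs D)"

lemma val_nth:
  assumes "distinct cs" "length r = length cs" "i < length cs"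
  shows "val cs r (cs ! i) = r ! i"
  using assms by (simp add: val_def map_of_zip_nth)

lemma wfD:
  assumes "wf_table T"
  shows "distinct (fst T)" "distinct (map fst (snd T))"
    "\<And>r D. (r, D) \<in> set (snd T) \<Longrightarrow> length r = length (fst T) \<and> D \<noteq> {} \<and> finite D"
    "snd T = [] \<Longrightarrow> fst T = []"
  using assms unfolding wf_table_def by auto

lemma Delta_len: "wf_table T \<Longrightarrow> r \<in> Delta T \<Longrightarrow> length r = length (fst T)"
  unfolding Delta_def using wfD(3) by force

lemma I_op_eq:
  assumes "\<not> atts T \<subseteq> D"
  shows "I_op D T = (map (\<lambda>i. fst T ! i) (keepD (fst T) D),
      map (\<lambda>k. (k, snd (hd (filter (\<lambda>x. projD (fst T) D (fst x) = k) (snd T)))))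
        (rev (remdups (rev (map (projD (fst T) D \<circ> fst) (snd T))))))"
  using assms unfolding I_op_def keepD_def projD_def Let_def by simp

lemma set_keepD: "(!) cs ` set (keepD cs D) = set cs - D"
  unfolding keepD_def by (auto simp: in_set_conv_nth)

lemma distinct_keepD: "distinct cs \<Longrightarrow> distinct (map (\<lambda>i. cs ! i) (keepD cs D))"
  unfolding keepD_def by (auto simp: distinct_map inj_on_def nth_eq_iff_index_eq)

lemma fst_I: "\<not> atts T \<subseteq> D \<Longrightarrow> fst (I_op D T) = map (\<lambda>i. fst T ! i) (keepD (fst T) D)"
  by (simp add: I_op_eq)

lemma atts_I: "atts (I_op D T) = atts T - D"
proof (cases "atts T \<subseteq> D")
  case True thus ?thesis by (auto simp: I_op_def Lam_def atts_def)
next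
  case False thus ?thesis by (simp add: fst_I atts_def set_keepD)
qed

lemma Delta_I: "\<not> atts T \<subseteq> D \<Longrightarrow> Delta (I_op D T) = projD (fst T) D ` Delta T"
  by (simp add: I_op_eq Delta_def image_image o_def)

lemma Delta_I_Lam: "atts T \<subseteq> D \<Longrightarrow> I_op D T = Lam"
  by (simp add: I_op_def)

lemma val_I:
  assumes "distinct (fst T)" "length r = length (fst T)" "f \<in> atts T" "f \<notin> D"
  shows "val (map (\<lambda>i. fst T ! i) (keepD (fst T) D)) (projD (fst T) D r) f = val (fst T) r f"
proof -
  let ?cs = "fst T"
  obtain i where i: "i < length ?cs" "?cs ! i = f" using assms(3) by (auto simp: atts_def in_set_conv_nth)
  have "i \<in> set (keepD ?cs D)" using i assms(4) by (auto simp: keepD_def)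
  then obtain j where j: "j < length (keepD ?cs D)" "keepD ?cs D ! j = i" by (auto simp: in_set_conv_nth)
  have dk: "distinct (map (\<lambda>i. fst T ! i) (keepD (fst T) D))" using distinct_keepD assms(1) by blast
  have "val (map (\<lambda>i. fst T ! i) (keepD (fst T) D)) (projD (fst T) D r) ((map (\<lambda>i. fst T ! i) (keepD (fst T) D)) ! j)
      = (projD (fst T) D r) ! j"
    by (rule val_nth) (use dk j in \<open>auto simp: projD_def\<close>)
  also have "\<dots> = r ! i" using j by (simp add: projD_def)
  also have "\<dots> = val ?cs r f" using val_nth[OF assms(1) assms(2) i(1)] i by simp
  finally show ?thesis using j i by simp
qed

lemma wf_I:
  assumes "wf_table T"
  shows "wf_table (I_op D T)"
proof (cases "atts T \<subseteq> D")
  case True thus ?thesis by (simp add: I_op_def Lam_def wf_table_def)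
next
  case False
  note wf = wfD[OF assms]
  let ?p = "projD (fst T) D"
  have ne: "snd T \<noteq> []" using False wf(4) by (auto simp: atts_def)
  show ?thesis
    unfolding wf_table_def
  proof (intro conjI)
    show "distinct (fst (I_op D T))" using False distinct_keepD wf(1) by (simp add: fst_I)
    show "distinct (map fst (snd (I_op D T)))" using False by (simp add: I_op_eq o_def)
    show "snd (I_op D T) = [] \<longrightarrow> fst (I_op D T) = []" using False ne by (simp add: I_op_eq)
    show "\<forall>(r, E)\<in>set (snd (I_op D T)). length r = length (fst (I_op D T)) \<and> E \<noteq> {} \<and> finite E"
    proof (clarsimp simp: I_op_eq[OF False])
      fix r E assume rE: "(r, E) \<in> set (snd T)"
      have "(r,E) \<in> set (filter (\<lambda>x. ?p (fst x) = ?p r) (snd T))" using rE by simp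
      hence "filter (\<lambda>x. ?p (fst x) = ?p r) (snd T) \<noteq> []" by (metis empty_iff list.set(1))
      hence "hd (filter (\<lambda>x. ?p (fst x) = ?p r) (snd T)) \<in> set (snd T)"
        using hd_in_set by (metis filter_is_subset subsetD)
      then obtain r' E' where h: "hd (filter (\<lambda>x. ?p (fst x) = ?p r) (snd T)) = (r', E')" "(r',E') \<in> set (snd T)"
        by (metis prod.exhaust)
      show "length (?p r) = length (keepD (fst T) D) \<and> snd (hd (filter (\<lambda>x. ?p (fst x) = ?p r) (snd T))) \<noteq> {}
          \<and> finite (snd (hd (filter (\<lambda>x. ?p (fst x) = ?p r) (snd T))))"
        using h wf(3)[OF h(2)] by (simp add: projD_def)
    qed
  qed
qed

lemma fst_J[simp]: "fst (J_op \<nu> T) = fst T" by (simp add: J_op_def)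
lemma atts_J[simp]: "atts (J_op \<nu> T) = atts T" by (simp add: atts_def)
lemma Delta_J[simp]: "Delta (J_op \<nu> T) = Delta T" by (simp add: J_op_def Delta_def o_def)
lemma snd_J: "set (snd (J_op \<nu> T)) = (\<lambda>r. (r, \<nu> r)) ` Delta T"
  by (auto simp: J_op_def Delta_def)

lemma wf_J:
  assumes "wf_table T" "\<And>r. length r = length (fst T) \<Longrightarrow> \<nu> r \<noteq> {} \<and> finite (\<nu> r)"
  shows "wf_table (J_op \<nu> T)"
  using wfD[OF assms(1)] assms(2) unfolding wf_table_def J_op_def by (auto simp: o_def)

lemma Delta_finite: "finite (Delta T)" by (simp add: Delta_def)

lemma Nrows_card: "wf_table T \<Longrightarrow> Nrows T = card (Delta T)"
  using wfD(2) unfolding Nrows_def Delta_def by (metis distinct_card length_map)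

lemma card_atts: "wf_table T \<Longrightarrow> card (atts T) = length (fst T)"
  using wfD(1) by (simp add: atts_def distinct_card)

lemma filter_fst_unique:
  "distinct (map fst xs) \<Longrightarrow> x \<in> set xs \<Longrightarrow> filter (\<lambda>y. fst y = fst x) xs = [x]"
proof (induction xs)
  case Nil then show ?case by simp
next
  case (Cons a xs)
  show ?case
  proof (cases "a = x")
    case True
    with Cons.prems have "\<forall>y\<in>set xs. fst y \<noteq> fst x" by (auto simp: image_iff)
    with True show ?thesis by (simp add: filter_empty_conv)
  next
    case False
    with Cons.prems have "x \<in> set xs" by simp
    moreover have "fst a \<noteq> fst x" using Cons.prems \<open>x \<in> set xs\<close> by (auto simp: image_iff)
    ultimately show ?thesis using Cons by simp
  qed
qed

lemma I_empty_id:
  assumes "wf_table T" "fst T \<noteq> []"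
  shows "I_op {} T = T"
proof -
  note wf = wfD[OF assms(1)]
  have na: "\<not> atts T \<subseteq> {}" using assms(2) by (auto simp: atts_def)
  have k: "keepD (fst T) {} = [0..<length (fst T)]" by (simp add: keepD_def)
  have p: "projD (fst T) {} (fst x) = fst x" if x: "x \<in> set (snd T)" for x
  proof -
    have "length (fst x) = length (fst T)" using wf(3)[of "fst x" "snd x"] x by simp
    thus ?thesis using k by (simp add: projD_def) (metis map_nth)
  qed
  have f: "map (\<lambda>i. fst T ! i) (keepD (fst T) {}) = fst T" using k by (simp add: map_nth)
  have m: "map (projD (fst T) {} \<circ> fst) (snd T) = map fst (snd T)" using p by simp
  have keys: "rev (remdups (rev (map (projD (fst T) {} \<circ> fst) (snd T)))) = map fst (snd T)"
    using wf(2) by (simp add: m distinct_remdups_id)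
  have "map (\<lambda>k. (k, snd (hd (filter (\<lambda>x. projD (fst T) {} (fst x) = k) (snd T))))) (map fst (snd T)) = snd T"
  proof -
    have "map (\<lambda>k. (k, snd (hd (filter (\<lambda>x. projD (fst T) {} (fst x) = k) (snd T))))) (map fst (snd T))
        = map (\<lambda>x. x) (snd T)"
    proof (simp only: map_map, rule map_cong[OF refl])
      fix x assume x: "x \<in> set (snd T)"
      have "filter (\<lambda>y. projD (fst T) {} (fst y) = fst x) (snd T) = filter (\<lambda>y. fst y = fst x) (snd T)"
        using p by (intro filter_cong) auto
      also have "\<dots> = [x]" using filter_fst_unique[OF wf(2) x] .
      finally show "((\<lambda>k. (k, snd (hd (filter (\<lambda>x. projD (fst T) {} (fst x) = k) (snd T))))) \<circ> fst) x = x" by simp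
    qed
    thus ?thesis by simp
  qed
  thus ?thesis using I_op_eq[OF na] f keys by (simp add: prod_eq_iff)
qed

lemma J_self:
  assumes "wf_table T"
  shows "J_op (\<lambda>r. if \<exists>D. (r, D) \<in> set (snd T) then (THE D. (r, D) \<in> set (snd T)) else {0}) T = T"
proof -
  note wf = wfD[OF assms]
  have "\<And>r D. (r, D) \<in> set (snd T) \<Longrightarrow> (THE D. (r, D) \<in> set (snd T)) = D"
    using wf(2) by (metis eq_key_imp_eq_value the_equality)
  hence "map (\<lambda>x. (fst x, if \<exists>D. (fst x, D) \<in> set (snd T) then (THE D. (fst x, D) \<in> set (snd T)) else {0})) (snd T)
     = map (\<lambda>x. x) (snd T)"
    by (intro map_cong) auto
  hence "map (\<lambda>x. (fst x, if \<exists>D. (fst x, D) \<in> set (snd T) then (THE D. (fst x, D) \<in> set (snd T)) else {0})) (snd T)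
     = snd T" by simp
  thus ?thesis by (simp add: J_op_def)
qed

lemma closed_wf: "closed_class A \<Longrightarrow> T \<in> A \<Longrightarrow> wf_table T"
  unfolding closed_class_def by auto

lemma closed_JI:
  assumes "closed_class A" "T \<in> A" "D \<subseteq> atts T"
    "\<And>r. length r = card (atts T - D) \<Longrightarrow> \<nu> r \<noteq> {} \<and> finite (\<nu> r)"
  shows "J_op \<nu> (I_op D T) \<in> A"
proof -
  have "J_op \<nu> (I_op D T) \<in> tclosure T" unfolding tclosure_def using assms(3,4) by blast
  hence "J_op \<nu> (I_op D T) \<in> cclosure A" using assms(2) by (auto simp: cclosure_def)
  thus ?thesis using assms(1) by (simp add: closed_class_def)
qed

lemma J_Lam[simp]: "J_op \<nu> Lam = Lam" by (simp add: J_op_def Lam_def)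

lemma is_empty_Lam[simp]: "is_empty Lam" by (simp add: is_empty_def Lam_def)

lemma Lam_in: "closed_class A \<Longrightarrow> Lam \<in> A"
proof -
  assume c: "closed_class A"
  then obtain T where "T \<in> A" by (auto simp: closed_class_def)
  have "J_op (\<lambda>_. {0}) (I_op (atts T) T) \<in> A" by (rule closed_JI[OF c \<open>T\<in>A\<close>]) auto
  thus ?thesis by (simp add: Delta_I_Lam)
qed

lemma A_cols:
  assumes "closed_class A" "T \<in> A" "\<not> is_empty T"
  shows "fst T \<noteq> []"
proof -
  have "T \<in> cclosure A" using assms(1,2) by (simp add: closed_class_def)
  then obtain T0 D \<nu> where T: "T = J_op \<nu> (I_op D T0)" by (auto simp: cclosure_def tclosure_def)
  show ?thesis
  proof (cases "atts T0 \<subseteq> D")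
    case True thus ?thesis using T assms(3) by (simp add: Delta_I_Lam)
  next
    case False
    then obtain f where "f \<in> atts T0" "f \<notin> D" by auto
    hence "atts T \<noteq> {}" using T atts_I[of D T0] by auto
    thus ?thesis by (auto simp: atts_def)
  qed
qed

lemma closed_J:
  assumes "closed_class A" "T \<in> A" "\<not> is_empty T" "\<And>r. \<nu> r \<noteq> {} \<and> finite (\<nu> r)"
  shows "J_op \<nu> T \<in> A"
  using closed_JI[OF assms(1,2), of "{}" \<nu>] assms I_empty_id[OF closed_wf[OF assms(1,2)] A_cols[OF assms(1-3)]]
  by simp

lemma self_tclosure:
  assumes "wf_table T" "fst T \<noteq> []"
  shows "T \<in> tclosure T"
proof -
  let ?\<nu> = "\<lambda>r. if \<exists>D. (r, D) \<in> set (snd T) then (THE D. (r, D) \<in> set (snd T)) else {0}"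
  have good: "?\<nu> r \<noteq> {} \<and> finite (?\<nu> r)" for r
  proof (cases "\<exists>D. (r, D) \<in> set (snd T)")
    case True
    then obtain D where D: "(r,D) \<in> set (snd T)" by blast
    have "(THE D. (r, D) \<in> set (snd T)) = D"
      using wfD(2)[OF assms(1)] D by (metis eq_key_imp_eq_value the_equality)
    thus ?thesis using D wfD(3)[OF assms(1) D] by simp
  qed simp
  have "J_op ?\<nu> (I_op {} T) = T" using I_empty_id[OF assms] J_self[OF assms(1)] by simp
  hence "T = J_op ?\<nu> (I_op {} T) \<and> {} \<subseteq> atts T \<and> (\<forall>r. length r = card (atts T - {}) \<longrightarrow> ?\<nu> r \<noteq> {} \<and> finite (?\<nu> r))"
    using good by simp
  thus ?thesis unfolding tclosure_def by blast
qed

lemma dpath_Leaf[simp]: "dpath (Leaf x) w d \<longleftrightarrow> w = [] \<and> d = x"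
  by (subst dpath.simps) auto

lemma dpath_Node[simp]: "dpath (Node f ch) w d \<longleftrightarrow> (\<exists>\<delta> t w'. (\<delta>,t) \<in> set ch \<and> w = (f,\<delta>)#w' \<and> dpath t w' d)"
proof
  assume "dpath (Node f ch) w d" thus "\<exists>\<delta> t w'. (\<delta>,t) \<in> set ch \<and> w = (f,\<delta>)#w' \<and> dpath t w' d"
    by (cases rule: dpath.cases) auto
next
  assume "\<exists>\<delta> t w'. (\<delta>,t) \<in> set ch \<and> w = (f,\<delta>)#w' \<and> dpath t w' d"
  thus "dpath (Node f ch) w d" by (auto intro: dpath.intros)
qed

lemma att_in_Leaf[simp]: "att_in (Leaf x) g \<longleftrightarrow> False"
  by (subst att_in.simps) auto

lemma att_in_Node[simp]: "att_in (Node f ch) g \<longleftrightarrow> g = f \<or> (\<exists>p\<in>set ch. att_in (snd p) g)"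
proof
  assume "att_in (Node f ch) g" thus "g = f \<or> (\<exists>p\<in>set ch. att_in (snd p) g)"
    by (cases rule: att_in.cases) auto
next
  assume "g = f \<or> (\<exists>p\<in>set ch. att_in (snd p) g)"
  thus "att_in (Node f ch) g" by (auto intro: att_in.intros)
qed

definition paths :: "dtree \<Rightarrow> (nat \<times> bool) list set" where
  "paths t = {w. \<exists>d. dpath t w d}"

lemma paths_Leaf[simp]: "paths (Leaf d) = {[]}"
  by (auto simp: paths_def elim: dpath.cases intro: dpath.intros)

lemma paths_Node: "paths (Node f ch) = (\<Union>p\<in>set ch. (\<lambda>w. (f, fst p) # w) ` paths (snd p))"
proof (intro equalityI subsetI)
  fix w assume "w \<in> paths (Node f ch)"
  then obtain d \<delta> t w' where "(\<delta>,t) \<in> set ch" "w = (f,\<delta>)#w'" "dpath t w' d" by (auto simp: paths_def)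
  thus "w \<in> (\<Union>p\<in>set ch. (\<lambda>w. (f, fst p) # w) ` paths (snd p))"
    by (intro UN_I[of "(\<delta>,t)"]) (auto simp: paths_def)
next
  fix w assume "w \<in> (\<Union>p\<in>set ch. (\<lambda>w. (f, fst p) # w) ` paths (snd p))"
  then obtain p w' d where "p \<in> set ch" "w = (f, fst p) # w'" "dpath (snd p) w' d" by (auto simp: paths_def)
  hence "dpath (Node f ch) w d" by (metis dpath.intros(2) prod.collapse)
  thus "w \<in> paths (Node f ch)" unfolding paths_def by blast
qed

lemma finite_paths: "finite (paths t)"
proof (induction t)
  case (Leaf x) thus ?case by simp
next
  case (Node f ch)
  have "finite (paths (snd p))" if "p \<in> set ch" for p
    using Node.IH[OF that] by (simp add: prod_set_defs)
  thus ?case by (simp add: paths_Node)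
qed

lemma wf_dt_path: "wf_dt t \<Longrightarrow> \<exists>w d. dpath t w d"
proof (induction rule: wf_dt.induct)
  case (1 d) thus ?case by (auto intro: dpath.intros)
next
  case (2 ch f)
  obtain p where p: "p \<in> set ch" using 2(1) by (cases ch) auto
  then obtain w d where "dpath (snd p) w d" using 2(3) by blast
  moreover have "(fst p, snd p) \<in> set ch" using p by simp
  ultimately have "dpath (Node f ch) ((f, fst p) # w) d" by (rule dpath.intros(2)[rotated])
  thus ?case by blast
qed

lemma dpath_att: "dpath t w d \<Longrightarrow> (f,\<delta>) \<in> set w \<Longrightarrow> att_in t f"
proof (induction rule: dpath.induct)
  case (1 d) thus ?case by simp
next
  case (2 \<delta>' t ch w d g)
  show ?case
  proof (cases "(f,\<delta>) = (g,\<delta>')")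
    case True thus ?thesis by (auto intro: att_in.intros)
  next
    case False
    hence "att_in t f" using 2 by auto
    have "\<exists>p\<in>set ch. att_in (snd p) f" using 2(1) \<open>att_in t f\<close> by (intro bexI[where x="(\<delta>',t)"]) auto
    thus ?thesis by simp
  qed
qed

lemma card_set_ch:
  assumes "distinct (map fst (ch :: (bool \<times> 'a) list))"
  shows "card (set ch) \<le> 2"
proof -
  have "distinct ch" using assms by (simp add: distinct_map)
  hence "card (set ch) = length ch" by (rule distinct_card)
  also have "\<dots> = card (set (map fst ch))" using distinct_card[OF assms] by simp
  finally have "card (set ch) = card (fst ` set ch)" by simp
  also have "\<dots> \<le> card (UNIV :: bool set)" by (rule card_mono) auto
  finally show ?thesis by simp
qed

lemma det_count:
  "det_dt t \<Longrightarrow> (\<And>w. w \<in> paths t \<Longrightarrow> length w \<le> h) \<Longrightarrow> card (paths t) \<le> 2 ^ h"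
proof (induction t arbitrary: h)
  case (Leaf x) thus ?case by simp
next
  case (Node f ch)
  have dch: "distinct (map fst ch)" and dsub: "\<And>p. p \<in> set ch \<Longrightarrow> det_dt (snd p)"
    using Node.prems(1) by (auto elim: det_dt.cases)
  show ?case
  proof (cases "paths (Node f ch) = {}")
    case True thus ?thesis by simp
  next
    case False
    then obtain w0 where "w0 \<in> paths (Node f ch)" by blast
    then obtain p w' where "w0 = (f, fst p) # w'" by (auto simp: paths_Node)
    hence "h \<noteq> 0" using Node.prems(2)[OF \<open>w0 \<in> _\<close>] by auto
    then obtain h' where h: "h = Suc h'" by (cases h) auto
    have ih: "card (paths (snd p)) \<le> 2 ^ h'" if p: "p \<in> set ch" for p
    proof -
      have "det_dt (snd p)" using dsub p .
      moreover have "length w \<le> h'" if "w \<in> paths (snd p)" for w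
        using Node.prems(2)[of "(f, fst p) # w"] p that h by (auto simp: paths_Node)
      moreover have "snd p \<in> Basic_BNFs.snds p" by (rule snds.intros)
      ultimately show ?thesis using Node.IH[OF p] by blast
    qed
    have "card (paths (Node f ch)) \<le> (\<Sum>p\<in>set ch. card ((\<lambda>w. (f, fst p) # w) ` paths (snd p)))"
      unfolding paths_Node by (rule card_UN_le) simp
    also have "\<dots> \<le> (\<Sum>p\<in>set ch. 2 ^ h')"
    proof (rule sum_mono)
      fix p assume p: "p \<in> set ch"
      have "card ((\<lambda>w. (f, fst p) # w) ` paths (snd p)) \<le> card (paths (snd p))"
        by (rule card_image_le[OF finite_paths])
      with ih[OF p] show "card ((\<lambda>w. (f, fst p) # w) ` paths (snd p)) \<le> 2 ^ h'" by linarith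
    qed
    also have "\<dots> = card (set ch) * 2 ^ h'" by simp
    also have "\<dots> \<le> 2 * 2 ^ h'" using card_set_ch[OF dch] by simp
    finally show ?thesis using h by simp
  qed
qed

primrec chain :: "(nat \<times> bool) list \<Rightarrow> nat \<Rightarrow> dtree" where
  "chain [] d = Leaf d"
| "chain (a # w) d = Node (fst a) [(snd a, chain w d)]"

lemma dpath_chain: "dpath (chain w d) w' d' \<longleftrightarrow> w' = w \<and> d' = d"
proof (induction w arbitrary: w')
  case Nil thus ?case by simp
next
  case (Cons a w)
  show ?case by (cases a) (simp add: Cons.IH)
qed

lemma wf_chain: "wf_dt (chain w d)"
  by (induction w) (auto intro: wf_dt.intros)

lemma att_chain: "att_in (chain w d) g \<Longrightarrow> g \<in> fst ` set w"
  by (induction w) auto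

primrec fullt :: "((nat \<times> bool) list \<Rightarrow> nat) \<Rightarrow> nat list \<Rightarrow> (nat \<times> bool) list \<Rightarrow> dtree" where
  "fullt pk [] \<beta> = Leaf (pk \<beta>)"
| "fullt pk (f # fs) \<beta> = Node f [(False, fullt pk fs (\<beta> @ [(f,False)])), (True, fullt pk fs (\<beta> @ [(f,True)]))]"

lemma fullt_wf: "wf_dt (fullt pk fs \<beta>)"
  by (induction fs arbitrary: \<beta>) (auto intro!: wf_dt.intros)

lemma fullt_det: "det_dt (fullt pk fs \<beta>)"
  by (induction fs arbitrary: \<beta>) (auto intro!: det_dt.intros)

lemma fullt_att: "att_in (fullt pk fs \<beta>) g \<Longrightarrow> g \<in> set fs"
proof (induction fs arbitrary: \<beta>)
  case Nil thus ?case by (auto elim: att_in.cases)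
next
  case (Cons f fs)
  from Cons.prems show ?case using Cons.IH by auto
qed

lemma fullt_path: "dpath (fullt pk fs \<beta>) w d \<Longrightarrow> d = pk (\<beta> @ w) \<and> (\<forall>f\<in>set fs. \<exists>\<delta>. (f,\<delta>) \<in> set w)"
proof (induction fs arbitrary: \<beta> w)
  case Nil thus ?case by (auto elim: dpath.cases)
next
  case (Cons f fs)
  from Cons.prems obtain \<delta> w' where w: "w = (f,\<delta>)#w'" "dpath (fullt pk fs (\<beta> @ [(f,\<delta>)])) w' d"
    by (auto split: if_splits)
  from Cons.IH[OF w(2)] show ?case using w by auto
qed

lemma fullt_cover: "\<exists>w d. dpath (fullt pk fs \<beta>) w d \<and> sat cs r w"
proof (induction fs arbitrary: \<beta>)
  case Nil thus ?case by simp
next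
  case (Cons f fs)
  obtain w d where d1: "dpath (fullt pk fs (\<beta> @ [(f, val cs r f)])) w d" and d2: "sat cs r w" using Cons by blast
  have mem: "(val cs r f, fullt pk fs (\<beta> @ [(f, val cs r f)])) \<in> set [(False, fullt pk fs (\<beta> @ [(f,False)])), (True, fullt pk fs (\<beta> @ [(f,True)]))]"
    by (cases "val cs r f") auto
  have "dpath (fullt pk (f # fs) \<beta>) ((f, val cs r f) # w) d"
    using dpath.intros(2)[OF mem d1] by simp
  hence "dpath (fullt pk (f # fs) \<beta>) ((f, val cs r f) # w) d \<and> sat cs r ((f, val cs r f) # w)"
    using d2 by simp
  thus ?case by blast
qed

lemma tree_atts_single: "tree_atts [t] = {f. att_in t f}"
  by (simp add: tree_atts_def)

lemma cpath_single: "cpath [t] w d \<longleftrightarrow> dpath t w d"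
  by (simp add: cpath_def)

lemma det_exists:
  assumes "wf_table T"
  shows "\<exists>\<Gamma>. det_tree T \<Gamma>"
proof -
  let ?cs = "fst T"
  define pk where "pk = (\<lambda>w. if PiT (sub T w) \<noteq> {} then SOME x. x \<in> PiT (sub T w) else 0)"
  let ?t = "fullt pk ?cs []"
  note wf = wfD[OF assms]
  have leaf: "is_empty (sub T w) \<or> d \<in> PiT (sub T w)" if p: "dpath ?t w d" for w d
  proof (cases "is_empty (sub T w)")
    case False
    then obtain r where r: "r \<in> Delta T" "sat ?cs r w" by (auto simp: is_empty_iff Delta_sub)
    obtain D where rD: "(r, D) \<in> set (snd T)" using r(1) by (auto simp: Delta_def)
    have all: "\<forall>f\<in>set ?cs. \<exists>\<delta>. (f,\<delta>) \<in> set w" and d: "d = pk w" using fullt_path[OF p] by auto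
    have "r' = r" if "(r', D') \<in> set (snd T)" "sat ?cs r' w" for r' D'
    proof (rule nth_equalityI)
      have l1: "length r' = length ?cs" and l2: "length r = length ?cs" using wf(3) that(1) rD by auto
      thus "length r' = length r" by simp
      fix i assume "i < length r'"
      hence i: "i < length ?cs" using l1 by simp
      obtain \<delta> where "(?cs ! i, \<delta>) \<in> set w" using all i by (meson nth_mem)
      hence "val ?cs r' (?cs ! i) = val ?cs r (?cs ! i)" using that(2) r(2) by (auto simp: sat_def)
      thus "r' ! i = r ! i" using val_nth[OF wf(1) l1 i] val_nth[OF wf(1) l2 i] by simp
    qed
    hence DD: "D' = D" if "(r', D') \<in> set (snd T)" "sat ?cs r' w" for r' D'
      using that rD eq_key_imp_eq_value[OF wf(2), of r D' D] by blast
    have Dne: "D \<noteq> {}" using wf(3)[OF rD] by simp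
    have "x \<in> PiT (sub T w) \<longleftrightarrow> x \<in> D" for x
    proof
      assume "x \<in> PiT (sub T w)" thus "x \<in> D" using rD r(2) unfolding PiT_sub by blast
    next
      assume "x \<in> D" thus "x \<in> PiT (sub T w)" using DD unfolding PiT_sub by blast
    qed
    hence PD: "PiT (sub T w) = D" by blast
    have "(SOME x. x \<in> D) \<in> D" using Dne by (simp add: some_in_eq)
    hence "pk w \<in> PiT (sub T w)" using PD Dne unfolding pk_def by simp
    thus ?thesis using d by simp
  qed simp
  have "det_tree T [?t]"
    unfolding det_tree_def nd_tree_def two_tree_def
  proof (intro conjI ballI allI impI)
    show "[?t] \<noteq> []" by simp
    show "wf_dt t" if "t \<in> set [?t]" for t using that fullt_wf by simp
    show "tree_atts [?t] \<subseteq> atts T" using fullt_att by (auto simp: tree_atts_single atts_def)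
    show "\<exists>w d. cpath [?t] w d \<and> r \<in> Delta (sub T w)" if "r \<in> Delta T" for r
      using fullt_cover[of pk ?cs "[]" ?cs r] that by (auto simp: cpath_single Delta_sub)
    show "is_empty (sub T w) \<or> d \<in> PiT (sub T w)" if "cpath [?t] w d" for w d
      using leaf that by (simp add: cpath_single)
    show "det_dt t" if "t \<in> set [?t]" for t using that fullt_det by simp
  qed simp
  thus ?thesis by blast
qed

lemma pb0: assumes "bounded_cm \<psi>"
  shows "(\<forall>a. \<psi> a = 0 \<longleftrightarrow> a = []) \<and> (\<forall>a b. mset a = mset b \<longrightarrow> \<psi> a = \<psi> b)
    \<and> (\<forall>a b. \<psi> a \<le> \<psi> (a @ b)) \<and> (\<forall>a b. \<psi> (a @ b) \<le> \<psi> a + \<psi> b) \<and> (\<forall>a. length a \<le> \<psi> a)"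
  using assms unfolding bounded_cm_def partially_bounded_cm_def by (elim conjE) (intro conjI)

lemma pb: assumes "bounded_cm \<psi>"
  shows "\<And>a. \<psi> a = 0 \<longleftrightarrow> a = []" "\<And>a b. mset a = mset b \<Longrightarrow> \<psi> a = \<psi> b"
    "\<And>a b. \<psi> a \<le> \<psi> (a @ b)" "\<And>a b. \<psi> (a @ b) \<le> \<psi> a + \<psi> b" "\<And>a. length a \<le> \<psi> a"
proof -
  note h = pb0[OF assms]
  show "\<And>a. \<psi> a = 0 \<longleftrightarrow> a = []" using h by (elim conjE allE)
  show "\<And>a b. mset a = mset b \<Longrightarrow> \<psi> a = \<psi> b" using h by (elim conjE allE impE)
  show "\<And>a b. \<psi> a \<le> \<psi> (a @ b)" using h by (elim conjE allE)
  show "\<And>a b. \<psi> (a @ b) \<le> \<psi> a + \<psi> b" using h by (elim conjE allE)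
  show "\<And>a. length a \<le> \<psi> a" using h by (elim conjE allE)
qed

lemma psi_submset:
  assumes "bounded_cm \<psi>" "mset a \<subseteq># mset b" shows "\<psi> a \<le> \<psi> b"
proof -
  obtain c where c: "mset b = mset a + c" using assms(2) subset_mset.le_iff_add by blast
  obtain cl where "mset cl = c" using ex_mset[of c] by (elim exE)
  hence "mset b = mset (a @ cl)" using c by simp
  hence "\<psi> b = \<psi> (a @ cl)" by (rule pb(2)[OF assms(1)])
  thus ?thesis using pb(3)[OF assms(1)] by simp
qed

lemma psi_single:
  assumes "bounded_cm \<psi>" "f \<in> set a" shows "\<psi> [f] \<le> \<psi> a"
  using psi_submset[OF assms(1)] assms(2) by simp

lemma psi_sum:
  assumes "bounded_cm \<psi>" "\<And>f. f \<in> set a \<Longrightarrow> \<psi> [f] \<le> n" shows "\<psi> a \<le> length a * n"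
  using assms(2)
proof (induction a)
  case Nil thus ?case using pb(1)[OF assms(1)] by simp
next
  case (Cons f a)
  have "\<psi> (f # a) = \<psi> ([f] @ a)" by simp
  also have "\<dots> \<le> \<psi> [f] + \<psi> a" by (rule pb(4)[OF assms(1)])
  also have "\<dots> \<le> n + length a * n" using Cons by (intro add_mono) auto
  finally show ?case by simp
qed

lemma psiw_append: "bounded_cm \<psi> \<Longrightarrow> psiw \<psi> (a @ b) \<le> psiw \<psi> a + psiw \<psi> b"
  unfolding psiw_def using pb(4)[of \<psi> "map fst a" "map fst b"] by simp

lemma psiw_len: "bounded_cm \<psi> \<Longrightarrow> length w \<le> psiw \<psi> w"
  unfolding psiw_def using pb(5)[of \<psi> "map fst w"] by simp

lemma psiw_Nil[simp]: "bounded_cm \<psi> \<Longrightarrow> psiw \<psi> [] = 0"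
  unfolding psiw_def using pb(1)[of \<psi> "[]"] by simp

lemma cpaths_eq: "{w. \<exists>d. cpath \<Gamma> w d} = (\<Union>t\<in>set \<Gamma>. paths t)"
  by (auto simp: cpath_def paths_def)

lemma finite_cpaths: "finite {w. \<exists>d. cpath \<Gamma> w d}"
  unfolding cpaths_eq by (simp add: finite_paths)

lemma psi_tree_eq: "psi_tree \<psi> \<Gamma> = Max (psiw \<psi> ` {w. \<exists>d. cpath \<Gamma> w d})"
  unfolding psi_tree_def by (rule arg_cong[where f=Max]) auto

lemma psi_tree_ge: "cpath \<Gamma> w d \<Longrightarrow> psiw \<psi> w \<le> psi_tree \<psi> \<Gamma>"
  unfolding psi_tree_eq by (rule Max_ge) (use finite_cpaths in auto)

lemma psi_tree_le:
  assumes "two_tree \<Gamma>" "\<And>w d. cpath \<Gamma> w d \<Longrightarrow> psiw \<psi> w \<le> c"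
  shows "psi_tree \<psi> \<Gamma> \<le> c"
proof -
  obtain t where t: "t \<in> set \<Gamma>" using assms(1) by (cases \<Gamma>) (auto simp: two_tree_def)
  hence "wf_dt t" using assms(1) by (auto simp: two_tree_def)
  then obtain w d where "dpath t w d" using wf_dt_path by blast
  hence ne: "cpath \<Gamma> w d" using t by (auto simp: cpath_def)
  show ?thesis unfolding psi_tree_eq
    by (rule Max.boundedI) (use finite_cpaths ne assms(2) in auto)
qed

lemma psi_d_le: "det_tree T \<Gamma> \<Longrightarrow> psi_d \<psi> T \<le> psi_tree \<psi> \<Gamma>"
  unfolding psi_d_def by (auto simp: Inf_nat_def intro!: Least_le)

lemma psi_a_le: "nd_tree T \<Gamma> \<Longrightarrow> psi_a \<psi> T \<le> psi_tree \<psi> \<Gamma>"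
  unfolding psi_a_def by (auto simp: Inf_nat_def intro!: Least_le)

lemma psi_d_att:
  assumes "wf_table T" "\<not> is_empty T"
  shows "\<exists>\<Gamma>. det_tree T \<Gamma> \<and> psi_d \<psi> T = psi_tree \<psi> \<Gamma>"
proof -
  have "{psi_tree \<psi> \<Gamma> | \<Gamma>. det_tree T \<Gamma>} \<noteq> {}" using det_exists[OF assms(1)] by auto
  hence "Inf {psi_tree \<psi> \<Gamma> | \<Gamma>. det_tree T \<Gamma>} \<in> {psi_tree \<psi> \<Gamma> | \<Gamma>. det_tree T \<Gamma>}" by (rule Inf_nat_def1)
  thus ?thesis using assms(2) unfolding psi_d_def by auto
qed

lemma det_nd: "det_tree T \<Gamma> \<Longrightarrow> nd_tree T \<Gamma>" by (simp add: det_tree_def)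

lemma psi_a_att:
  assumes "wf_table T" "\<not> is_empty T"
  shows "\<exists>\<Gamma>. nd_tree T \<Gamma> \<and> psi_a \<psi> T = psi_tree \<psi> \<Gamma>"
proof -
  have "{psi_tree \<psi> \<Gamma> | \<Gamma>. nd_tree T \<Gamma>} \<noteq> {}" proof -
    obtain \<Gamma> where "det_tree T \<Gamma>" using det_exists[OF assms(1)] by blast
    hence "nd_tree T \<Gamma>" by (rule det_nd)
    thus ?thesis by blast
  qed
  hence "Inf {psi_tree \<psi> \<Gamma> | \<Gamma>. nd_tree T \<Gamma>} \<in> {psi_tree \<psi> \<Gamma> | \<Gamma>. nd_tree T \<Gamma>}" by (rule Inf_nat_def1)
  thus ?thesis using assms(2) unfolding psi_a_def by auto
qed

lemma Delta_sub_J: "Delta (sub (J_op \<nu> T) w) = Delta (sub T w)"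
  by (simp add: Delta_sub)

lemma PiT_sub_J: "x \<in> PiT (sub (J_op \<nu> T) w) \<longleftrightarrow> (\<forall>r\<in>Delta T. sat (fst T) r w \<longrightarrow> x \<in> \<nu> r)"
  unfolding PiT_sub snd_J by auto

lemma is_empty_J[simp]: "is_empty (J_op \<nu> T) \<longleftrightarrow> is_empty T"
  by (simp add: is_empty_iff)

definition essential :: "nat list \<Rightarrow> row set \<Rightarrow> (nat \<times> bool) list set \<Rightarrow> (nat \<times> bool) list set" where
  "essential cs R W = {w\<in>W. \<exists>r\<in>R. \<forall>w'\<in>W. sat cs r w' \<longleftrightarrow> w' = w}"

lemma GEN:
  assumes A: "closed_class A" and psi: "bounded_cm \<psi>" and T: "T \<in> A" "\<not> is_empty T"
    and W: "finite W" "W \<noteq> {}" "W \<subseteq> words T" "\<And>w. w \<in> W \<Longrightarrow> psiw \<psi> w \<le> c"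
    and cov: "\<And>r. r \<in> Delta T \<Longrightarrow> \<exists>w\<in>W. sat (fst T) r w"
  shows "\<exists>T'\<in>A. psi_a \<psi> T' \<le> c \<and> card (essential (fst T) (Delta T) W) \<le> 2 ^ psi_d \<psi> T'"
proof -
  let ?cs = "fst T"
  obtain e :: "(nat \<times> bool) list \<Rightarrow> nat" where e: "inj_on e W"
    using finite_imp_inj_to_nat_seg[OF W(1)] by blast
  define \<nu> where "\<nu> r = (if \<exists>w\<in>W. sat ?cs r w then e ` {w\<in>W. sat ?cs r w} else {0})" for r
  have \<nu>ok: "\<nu> r \<noteq> {} \<and> finite (\<nu> r)" for r
    unfolding \<nu>_def using W(1) by auto
  define T' where "T' = J_op \<nu> T"
  have T'A: "T' \<in> A" unfolding T'_def by (rule closed_J[OF A T \<nu>ok])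
  have wfT: "wf_table T" using closed_wf[OF A T(1)] .
  have wfT': "wf_table T'" using closed_wf[OF A T'A] .
  have neT': "\<not> is_empty T'" using T(2) by (simp add: T'_def)
  obtain ws where ws: "set ws = W" using finite_list[OF W(1)] by blast
  define \<Gamma> where "\<Gamma> = map (\<lambda>w. chain w (e w)) ws"
  have cp: "cpath \<Gamma> w d \<longleftrightarrow> w \<in> W \<and> d = e w" for w d
    unfolding \<Gamma>_def cpath_def using ws by (auto simp: dpath_chain)
  have nd: "nd_tree T' \<Gamma>"
    unfolding nd_tree_def two_tree_def
  proof (intro conjI allI impI ballI)
    show "\<Gamma> \<noteq> []" using ws W(2) by (auto simp: \<Gamma>_def)
    show "wf_dt t" if "t \<in> set \<Gamma>" for t using that wf_chain by (auto simp: \<Gamma>_def)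
    show "tree_atts \<Gamma> \<subseteq> atts T'"
    proof
      fix g assume "g \<in> tree_atts \<Gamma>"
      then obtain w where w: "w \<in> W" "att_in (chain w (e w)) g" using ws by (auto simp: tree_atts_def \<Gamma>_def)
      hence "g \<in> fst ` set w" using att_chain by blast
      thus "g \<in> atts T'" using W(3) w(1) by (auto simp: words_def T'_def)
    qed
    show "\<exists>w d. cpath \<Gamma> w d \<and> r \<in> Delta (sub T' w)" if "r \<in> Delta T'" for r
    proof -
      have "r \<in> Delta T" using that by (simp add: T'_def)
      then obtain w where "w \<in> W" "sat ?cs r w" using cov by blast
      thus ?thesis using \<open>r \<in> Delta T\<close> cp by (auto simp: T'_def Delta_sub)
    qed
    show "is_empty (sub T' w) \<or> d \<in> PiT (sub T' w)" if "cpath \<Gamma> w d" for w d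
    proof -
      have w: "w \<in> W" "d = e w" using that cp by auto
      have "d \<in> \<nu> r" if "r \<in> Delta T" "sat ?cs r w" for r
        using w that unfolding \<nu>_def by auto
      hence "d \<in> PiT (sub T' w)" unfolding T'_def PiT_sub_J by blast
      thus ?thesis by blast
    qed
  qed
  have "psi_a \<psi> T' \<le> psi_tree \<psi> \<Gamma>" by (rule psi_a_le[OF nd])
  also have "\<dots> \<le> c"
    by (rule psi_tree_le) (use nd W(4) cp in \<open>auto simp: nd_tree_def\<close>)
  finally have pa: "psi_a \<psi> T' \<le> c" .
  obtain \<Gamma>' where \<Gamma>': "det_tree T' \<Gamma>'" "psi_d \<psi> T' = psi_tree \<psi> \<Gamma>'"
    using psi_d_att[OF wfT' neT'] by blast
  obtain t where t: "\<Gamma>' = [t]" "det_dt t" using \<Gamma>'(1) unfolding det_tree_def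
    by (cases \<Gamma>') auto
  let ?E = "essential ?cs (Delta T) W"
  have "\<exists>r\<in>Delta T. \<forall>w'\<in>W. sat ?cs r w' \<longleftrightarrow> w' = w" if "w \<in> ?E" for w
    using that unfolding essential_def by blast
  then obtain rr where rr: "\<And>w. w \<in> ?E \<Longrightarrow> rr w \<in> Delta T \<and> (\<forall>w'\<in>W. sat ?cs (rr w) w' \<longleftrightarrow> w' = w)"
    by metis
  have EW: "?E \<subseteq> W" unfolding essential_def by blast
  have \<nu>rr: "\<nu> (rr w) = {e w}" if "w \<in> ?E" for w
  proof -
    have "{w'\<in>W. sat ?cs (rr w) w'} = {w}" using rr[OF that] EW that by auto
    thus ?thesis unfolding \<nu>_def using EW that by auto
  qed
  have "\<exists>p d. dpath t p d \<and> rr w \<in> Delta (sub T' p) \<and> d \<in> PiT (sub T' p)" if "w \<in> ?E" for w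
  proof -
    have "rr w \<in> Delta T'" using rr[OF that] by (simp add: T'_def)
    then obtain p d where pd: "cpath \<Gamma>' p d" "rr w \<in> Delta (sub T' p)"
      using \<Gamma>'(1) unfolding det_tree_def nd_tree_def by blast
    have "is_empty (sub T' p) \<or> d \<in> PiT (sub T' p)"
      using \<Gamma>'(1) pd(1) unfolding det_tree_def nd_tree_def by blast
    moreover have "\<not> is_empty (sub T' p)" using pd(2) by (auto simp: is_empty_iff)
    ultimately show ?thesis using pd t(1) by (auto simp: cpath_def)
  qed
  then obtain pp dd where pp: "\<And>w. w \<in> ?E \<Longrightarrow> dpath t (pp w) (dd w) \<and> rr w \<in> Delta (sub T' (pp w)) \<and> dd w \<in> PiT (sub T' (pp w))"
    by metis
  have ddw: "dd w = e w" if "w \<in> ?E" for w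
  proof -
    have "dd w \<in> \<nu> (rr w)" using pp[OF that] rr[OF that] unfolding T'_def PiT_sub_J Delta_sub_J Delta_sub by auto
    thus ?thesis using \<nu>rr[OF that] by simp
  qed
  have inj: "inj_on pp ?E"
  proof (rule inj_onI)
    fix w1 w2 assume w1: "w1 \<in> ?E" and w2: "w2 \<in> ?E" and eq: "pp w1 = pp w2"
    have "rr w2 \<in> Delta T" "sat ?cs (rr w2) (pp w1)"
      using pp[OF w2] rr[OF w2] eq by (auto simp: T'_def Delta_sub)
    hence "dd w1 \<in> \<nu> (rr w2)" using pp[OF w1] unfolding T'_def PiT_sub_J by blast
    hence "e w1 = e w2" using ddw[OF w1] \<nu>rr[OF w2] by simp
    thus "w1 = w2" using e w1 w2 EW by (auto dest: inj_onD)
  qed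
  have "card ?E = card (pp ` ?E)" using inj by (simp add: card_image)
  also have "\<dots> \<le> card (paths t)"
    by (rule card_mono[OF finite_paths]) (use pp in \<open>auto simp: paths_def\<close>)
  also have "\<dots> \<le> 2 ^ psi_tree \<psi> \<Gamma>'"
  proof (rule det_count[OF t(2)])
    fix w assume "w \<in> paths t"
    then obtain d where "cpath \<Gamma>' w d" using t(1) by (auto simp: paths_def cpath_def)
    hence "psiw \<psi> w \<le> psi_tree \<psi> \<Gamma>'" by (rule psi_tree_ge)
    thus "length w \<le> psi_tree \<psi> \<Gamma>'" using psiw_len[OF psi, of w] by linarith
  qed
  finally show ?thesis using T'A pa \<Gamma>'(2) by auto
qed

lemma finite_atts[simp]: "finite (atts T)" by (simp add: atts_def)

lemma m_psi_ge: "f \<in> atts T \<Longrightarrow> \<psi> [f] \<le> m_psi \<psi> T"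
  unfolding m_psi_def by (rule Max_ge) auto

lemma m_psi_le: "(\<And>f. f \<in> atts T \<Longrightarrow> \<psi> [f] \<le> n) \<Longrightarrow> m_psi \<psi> T \<le> n"
  unfolding m_psi_def by (rule Max.boundedI) auto

lemma H_bound:
  assumes "\<forall>k. H_class \<psi> A k \<noteq> None"
  shows "\<exists>B. \<forall>T\<in>A. psi_a \<psi> T \<le> k \<longrightarrow> psi_d \<psi> T \<le> B"
proof -
  have "H_class \<psi> A k \<noteq> None" using assms by (elim allE)
  hence "finite (psi_d \<psi> ` {T \<in> A. psi_a \<psi> T \<le> k})"
    unfolding H_class_def max_if_finite_def by (simp split: if_splits)
  hence "\<exists>B. \<forall>x\<in>psi_d \<psi> ` {T \<in> A. psi_a \<psi> T \<le> k}. x \<le> B"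
    by (simp only: finite_nat_set_iff_bounded_le)
  then obtain B where "\<forall>x\<in>psi_d \<psi> ` {T \<in> A. psi_a \<psi> T \<le> k}. x \<le> B" by (elim exE)
  thus ?thesis by blast
qed

lemma unb_contra:
  assumes "\<forall>k. H_class \<psi> A k \<noteq> None"
    and "\<And>M::nat. \<exists>T'\<in>A. psi_a \<psi> T' \<le> k \<and> M \<le> 2 ^ psi_d \<psi> T'"
  shows False
proof -
  obtain B where B: "\<forall>T\<in>A. psi_a \<psi> T \<le> k \<longrightarrow> psi_d \<psi> T \<le> B" using H_bound[OF assms(1)] by blast
  obtain T' where T': "T' \<in> A" "psi_a \<psi> T' \<le> k" "Suc (2 ^ B) \<le> 2 ^ psi_d \<psi> T'" using assms(2)[of "Suc (2 ^ B)"] by (elim bexE conjE)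
  have "psi_d \<psi> T' \<le> B" using B T' by blast
  hence "(2::nat) ^ psi_d \<psi> T' \<le> 2 ^ B" by (simp add: power_increasing)
  thus False using T'(3) by linarith
qed

lemma bounded_by_H:
  assumes "\<forall>k. H_class \<psi> A k \<noteq> None"
    and "\<And>x::nat. x \<in> S \<Longrightarrow> \<exists>T'\<in>A. psi_a \<psi> T' \<le> k \<and> x \<le> 2 ^ psi_d \<psi> T'"
  shows "\<exists>B. \<forall>x\<in>S. x \<le> B"
proof -
  obtain B where B: "\<forall>T\<in>A. psi_a \<psi> T \<le> k \<longrightarrow> psi_d \<psi> T \<le> B" using H_bound[OF assms(1)] by blast
  have "x \<le> 2 ^ B" if xS: "x \<in> S" for x
  proof -
    obtain T' where T': "T' \<in> A" "psi_a \<psi> T' \<le> k" "x \<le> 2 ^ psi_d \<psi> T'" using assms(2)[OF xS] by (elim bexE conjE)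
    have "psi_d \<psi> T' \<le> B" using B T' by blast
    hence "(2::nat) ^ psi_d \<psi> T' \<le> 2 ^ B" by (simp add: power_increasing)
    thus ?thesis using T'(3) by linarith
  qed
  thus ?thesis by blast
qed

lemma psi_a_Lam: "psi_a \<psi> Lam = 0" by (simp add: psi_a_def)
lemma psi_d_Lam: "psi_d \<psi> Lam = 0" by (simp add: psi_d_def)

lemma trivial_T':
  assumes "closed_class A" shows "\<exists>T'\<in>A. psi_a \<psi> T' \<le> k \<and> (0::nat) \<le> 2 ^ psi_d \<psi> T'"
  using Lam_in[OF assms] psi_a_Lam[of \<psi>] by (intro bexI[of _ Lam]) auto

lemma L_core:
  assumes A: "closed_class A" and psi: "bounded_cm \<psi>" and T: "T \<in> A" and U: "irr_psi_cover \<psi> T n U"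
  shows "\<exists>T'\<in>A. psi_a \<psi> T' \<le> n \<and> card U \<le> 2 ^ psi_d \<psi> T'"
proof (cases "U = {}")
  case True thus ?thesis using Lam_in[OF A] psi_a_Lam[of \<psi>] by (intro bexI[of _ Lam]) auto
next
  case False
  have cov: "psi_cover \<psi> T n U" using U by (simp add: irr_psi_cover_def)
  have fin: "finite U" and sub: "U \<subseteq> {\<alpha> \<in> words T. psiw \<psi> \<alpha> \<le> n}"
    and un: "(\<Union>\<alpha>\<in>U. Delta (sub T \<alpha>)) = Delta T" using cov by (auto simp: psi_cover_def)
  have ne: "\<not> is_empty T"
  proof
    assume "is_empty T"
    hence "psi_cover \<psi> T n {}" by (simp add: psi_cover_def is_empty_iff)
    moreover have "{} \<subset> U" using False by blast
    ultimately show False using U by (auto simp: irr_psi_cover_def)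
  qed
  have ess: "essential (fst T) (Delta T) U = U"
  proof (intro equalityI subsetI)
    fix a assume "a \<in> essential (fst T) (Delta T) U" thus "a \<in> U" by (simp add: essential_def)
  next
    fix a assume a: "a \<in> U"
    have "U - {a} \<subset> U" using a by blast
    hence "\<not> psi_cover \<psi> T n (U - {a})" using U by (simp add: irr_psi_cover_def)
    moreover have "finite (U - {a})" "U - {a} \<subseteq> {\<alpha> \<in> words T. psiw \<psi> \<alpha> \<le> n}" using fin sub by auto
    ultimately have "(\<Union>\<alpha>\<in>U - {a}. Delta (sub T \<alpha>)) \<noteq> Delta T" by (simp add: psi_cover_def)
    moreover have "(\<Union>\<alpha>\<in>U - {a}. Delta (sub T \<alpha>)) \<subseteq> Delta T" by (auto simp: Delta_sub)
    ultimately obtain r where r: "r \<in> Delta T" "r \<notin> (\<Union>\<alpha>\<in>U - {a}. Delta (sub T \<alpha>))" by blast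
    have "\<forall>w'\<in>U. sat (fst T) r w' \<longleftrightarrow> w' = a"
    proof
      fix w' assume w': "w' \<in> U"
      show "sat (fst T) r w' \<longleftrightarrow> w' = a"
      proof
        assume "sat (fst T) r w'" thus "w' = a" using r w' by (auto simp: Delta_sub)
      next
        assume "w' = a"
        have "r \<in> (\<Union>\<alpha>\<in>U. Delta (sub T \<alpha>))" using un r(1) by simp
        then obtain b where "b \<in> U" "r \<in> Delta (sub T b)" by blast
        hence "b = a" using r(2) by blast
        thus "sat (fst T) r w'" using \<open>r \<in> Delta (sub T b)\<close> \<open>w' = a\<close> by (simp add: Delta_sub)
      qed
    qed
    thus "a \<in> essential (fst T) (Delta T) U" using a r(1) by (auto simp: essential_def)
  qed
  have "\<exists>T'\<in>A. psi_a \<psi> T' \<le> n \<and> card (essential (fst T) (Delta T) U) \<le> 2 ^ psi_d \<psi> T'"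
  proof (rule GEN[OF A psi T ne fin False])
    show "U \<subseteq> words T" using sub by blast
    show "\<And>w. w \<in> U \<Longrightarrow> psiw \<psi> w \<le> n" using sub by blast
    show "\<And>r. r \<in> Delta T \<Longrightarrow> \<exists>w\<in>U. sat (fst T) r w" using un by (auto simp: Delta_sub)
  qed
  thus ?thesis using ess by simp
qed

lemma annih_subset:
  assumes "annihilating T \<alpha>" "set \<beta> \<subseteq> set \<alpha>" "\<not> is_empty (sub T \<beta>) \<Longrightarrow> False"
  shows "annihilating T \<beta>"
proof -
  have "\<not> (\<exists>f \<delta> \<sigma>. (f, \<delta>) \<in> set \<beta> \<and> (f, \<sigma>) \<in> set \<beta> \<and> \<delta> \<noteq> \<sigma>)"
    using assms(1,2) unfolding annihilating_def by blast
  moreover have "fst ` set \<beta> \<subseteq> fst ` set \<alpha>" using assms(2) by (rule image_mono)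
  moreover have "fst ` set \<alpha> \<subseteq> atts T" using assms(1) unfolding annihilating_def words_def by simp
  ultimately have "fst ` set \<beta> \<subseteq> atts T" "\<not> (\<exists>f \<delta> \<sigma>. (f, \<delta>) \<in> set \<beta> \<and> (f, \<sigma>) \<in> set \<beta> \<and> \<delta> \<noteq> \<sigma>)" by blast+
  thus ?thesis using assms(3) unfolding annihilating_def words_def by auto
qed

lemma G_core:
  assumes A: "closed_class A" and psi: "bounded_cm \<psi>" and T: "T \<in> A" and m: "m_psi \<psi> T \<le> n"
    and irr: "irr_annihilating T \<alpha>"
  shows "\<exists>T'\<in>A. psi_a \<psi> T' \<le> n \<and> length \<alpha> \<le> 2 ^ psi_d \<psi> T'"
proof -
  let ?cs = "fst T"
  have ann: "annihilating T \<alpha>" and irr2: "\<And>I. I \<subset> {..<length \<alpha>} \<Longrightarrow> \<not> annihilating T (nths \<alpha> I)"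
    using irr by (auto simp: irr_annihilating_def)
  have aw: "set (map fst \<alpha>) \<subseteq> atts T" and emp: "Delta (sub T \<alpha>) = {}"
    using ann by (auto simp: annihilating_def words_def is_empty_iff)
  show ?thesis
  proof (cases "is_empty T")
    case True
    have "\<alpha> = []"
    proof (rule ccontr)
      assume "\<alpha> \<noteq> []"
      hence "{} \<subset> {..<length \<alpha>}" by auto
      moreover have "annihilating T (nths \<alpha> {})"
        using True by (simp add: annihilating_def words_def is_empty_iff Delta_sub)
      ultimately show False using irr2 by blast
    qed
    thus ?thesis using Lam_in[OF A] psi_a_Lam[of \<psi>] by (intro bexI[of _ Lam]) auto
  next
    case False
    define ng where "ng x = [(fst x, \<not> snd x)]" for x :: "nat \<times> bool"
    define W where "W = ng ` set \<alpha>"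
    have satng: "sat ?cs r (ng x) \<longleftrightarrow> val ?cs r (fst x) \<noteq> snd x" for r x
      by (cases x) (auto simp: ng_def)
    have ane: "\<alpha> \<noteq> []"
    proof
      assume "\<alpha> = []"
      hence "Delta (sub T \<alpha>) = Delta T" by (simp add: Delta_sub)
      thus False using emp False by (simp add: is_empty_iff)
    qed
    have "\<exists>T'\<in>A. psi_a \<psi> T' \<le> n \<and> card (essential ?cs (Delta T) W) \<le> 2 ^ psi_d \<psi> T'"
    proof (rule GEN[OF A psi T False])
      show "finite W" "W \<noteq> {}" using ane by (auto simp: W_def)
      show "W \<subseteq> words T" using aw by (auto simp: W_def ng_def words_def)
      show "psiw \<psi> w \<le> n" if wW: "w \<in> W" for w
      proof -
        obtain x where x: "x \<in> set \<alpha>" "w = ng x" using wW unfolding W_def by blast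
        have "fst x \<in> atts T" using x aw by auto
        hence "\<psi> [fst x] \<le> n" using m_psi_ge[of "fst x" T \<psi>] m by linarith
        thus ?thesis using x by (simp add: psiw_def ng_def)
      qed
      show "\<exists>w\<in>W. sat ?cs r w" if "r \<in> Delta T" for r
      proof -
        have "\<not> sat ?cs r \<alpha>" using that emp by (auto simp: Delta_sub)
        hence "\<not>(\<forall>x\<in>set \<alpha>. val ?cs r (fst x) = snd x)" unfolding sat_def case_prod_beta .
        then obtain x where "x \<in> set \<alpha>" "val ?cs r (fst x) \<noteq> snd x" by blast
        thus ?thesis using satng by (auto simp: W_def)
      qed
    qed
    then obtain T' where T': "T' \<in> A" "psi_a \<psi> T' \<le> n" "card (essential ?cs (Delta T) W) \<le> 2 ^ psi_d \<psi> T'"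
      by blast
    have rj: "\<exists>r\<in>Delta T. (\<forall>i<length \<alpha>. i \<noteq> j \<longrightarrow> val ?cs r (fst (\<alpha>!i)) = snd (\<alpha>!i))
               \<and> val ?cs r (fst (\<alpha>!j)) \<noteq> snd (\<alpha>!j)" if j: "j < length \<alpha>" for j
    proof -
      let ?I = "{..<length \<alpha>} - {j}"
      have "?I \<subset> {..<length \<alpha>}" using j by auto
      hence na: "\<not> annihilating T (nths \<alpha> ?I)" by (rule irr2)
      have ss: "set (nths \<alpha> ?I) \<subseteq> set \<alpha>" by (rule set_nths_subset)
      have "\<not> is_empty (sub T (nths \<alpha> ?I))"
      proof
        assume "is_empty (sub T (nths \<alpha> ?I))"
        hence "annihilating T (nths \<alpha> ?I)" using annih_subset[OF ann ss] by blast
        thus False using na by blast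
      qed
      then obtain r where r: "r \<in> Delta T" "sat ?cs r (nths \<alpha> ?I)" by (auto simp: is_empty_iff Delta_sub)
      have oth: "\<forall>i<length \<alpha>. i \<noteq> j \<longrightarrow> val ?cs r (fst (\<alpha>!i)) = snd (\<alpha>!i)"
      proof (intro allI impI)
        fix i assume "i < length \<alpha>" "i \<noteq> j"
        hence "\<alpha> ! i \<in> set (nths \<alpha> ?I)" by (auto simp: set_nths)
        thus "val ?cs r (fst (\<alpha>!i)) = snd (\<alpha>!i)" using r(2) by (cases "\<alpha> ! i") (auto simp: sat_def)
      qed
      moreover have "val ?cs r (fst (\<alpha>!j)) \<noteq> snd (\<alpha>!j)"
      proof
        assume jj: "val ?cs r (fst (\<alpha>!j)) = snd (\<alpha>!j)"
        have "sat ?cs r \<alpha>"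
          unfolding sat_def
        proof
          fix x assume "x \<in> set \<alpha>"
          then obtain i where "i < length \<alpha>" "x = \<alpha> ! i" by (auto simp: in_set_conv_nth)
          thus "case x of (f, \<delta>) \<Rightarrow> val ?cs r f = \<delta>" using oth jj by (cases "i = j") (auto split: prod.splits)
        qed
        thus False using r(1) emp by (auto simp: Delta_sub)
      qed
      ultimately show ?thesis using r(1) by blast
    qed
    then obtain rr where rr: "\<And>j. j < length \<alpha> \<Longrightarrow> rr j \<in> Delta T \<and> (\<forall>i<length \<alpha>. i \<noteq> j \<longrightarrow> val ?cs (rr j) (fst (\<alpha>!i)) = snd (\<alpha>!i))
               \<and> val ?cs (rr j) (fst (\<alpha>!j)) \<noteq> snd (\<alpha>!j)" by metis
    have ess: "ng (\<alpha> ! j) \<in> essential ?cs (Delta T) W" if j: "j < length \<alpha>" for j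
    proof -
      have "\<forall>w'\<in>W. sat ?cs (rr j) w' \<longleftrightarrow> w' = ng (\<alpha> ! j)"
      proof
        fix w' assume "w' \<in> W"
        then obtain i where i: "i < length \<alpha>" "w' = ng (\<alpha> ! i)" by (auto simp: W_def in_set_conv_nth)
        show "sat ?cs (rr j) w' \<longleftrightarrow> w' = ng (\<alpha> ! j)"
        proof
          assume "sat ?cs (rr j) w'"
          hence "val ?cs (rr j) (fst (\<alpha>!i)) \<noteq> snd (\<alpha>!i)" using i satng by simp
          hence "i = j" using rr[OF j] i(1) by blast
          thus "w' = ng (\<alpha> ! j)" using i by simp
        next
          assume "w' = ng (\<alpha> ! j)" thus "sat ?cs (rr j) w'" using rr[OF j] satng by simp
        qed
      qed
      moreover have "ng (\<alpha> ! j) \<in> W" using j by (auto simp: W_def)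
      ultimately show ?thesis using rr[OF j] by (auto simp: essential_def)
    qed
    have inj: "inj_on (\<lambda>j. ng (\<alpha> ! j)) {..<length \<alpha>}"
    proof (rule inj_onI)
      fix i j assume i: "i \<in> {..<length \<alpha>}" and j: "j \<in> {..<length \<alpha>}" and eq: "ng (\<alpha> ! i) = ng (\<alpha> ! j)"
      have "\<alpha> ! i = \<alpha> ! j" using eq by (cases "\<alpha> ! i"; cases "\<alpha> ! j") (auto simp: ng_def)
      show "i = j"
      proof (rule ccontr)
        assume "i \<noteq> j"
        hence "val ?cs (rr j) (fst (\<alpha>!i)) = snd (\<alpha>!i)" using rr j i by auto
        thus False using rr j \<open>\<alpha> ! i = \<alpha> ! j\<close> by auto
      qed
    qed
    have "length \<alpha> = card ((\<lambda>j. ng (\<alpha> ! j)) ` {..<length \<alpha>})" using inj by (simp add: card_image)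
    also have "\<dots> \<le> card (essential ?cs (Delta T) W)"
      by (rule card_mono) (use ess in \<open>auto simp: essential_def W_def\<close>)
    finally show ?thesis using T' by auto
  qed
qed

lemma complete_Delta:
  assumes "wf_table Q" "complete_table Q"
  shows "Delta Q = {r. length r = length (fst Q)}"
proof -
  let ?m = "length (fst Q)"
  have sub: "Delta Q \<subseteq> {r. length r = ?m}" using Delta_len[OF assms(1)] by blast
  have fin: "finite {r :: bool list. length r = ?m}" using finite_lists_length_eq[of "UNIV :: bool set" ?m] by simp
  have c1: "card {r :: bool list. length r = ?m} = 2 ^ ?m"
    using card_lists_length_eq[of "UNIV :: bool set" ?m] by simp
  have "card (Delta Q) = 2 ^ ?m"
    using assms Nrows_card[OF assms(1)] card_atts[OF assms(1)] by (simp add: complete_table_def)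
  thus ?thesis using card_subset_eq[OF fin sub] c1 by simp
qed

lemma Z_core:
  assumes A: "closed_class A" and psi: "bounded_cm \<psi>" and Q: "Q \<in> A" and mq: "m_psi \<psi> Q \<le> n"
    and cQ: "complete_table Q" and m2: "2 \<le> card (atts Q)"
  shows "\<exists>T'\<in>A. psi_a \<psi> T' \<le> 2 * n \<and> card (atts Q) - 1 \<le> 2 ^ psi_d \<psi> T'"
proof -
  let ?cs = "fst Q"
  let ?m = "card (atts Q)"
  have wf: "wf_table Q" using closed_wf[OF A Q] .
  have lm: "length ?cs = ?m" using card_atts[OF wf] by simp
  have dist: "distinct ?cs" using wfD(1)[OF wf] .
  have DQ: "Delta Q = {r. length r = ?m}" using complete_Delta[OF wf cQ] lm by simp
  have "replicate ?m False \<in> Delta Q" using DQ by simp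
  hence ne: "\<not> is_empty Q" by (auto simp: is_empty_iff)
  have vl: "val ?cs r (?cs ! i) = r ! i" if "length r = ?m" "i < ?m" for r i
    using val_nth[OF dist] that lm by simp
  have csm: "?cs ! i \<in> atts Q" if "i < ?m" for i using that lm by (simp add: atts_def)
  define wd where "wd i = [(?cs ! i, False), (?cs ! Suc i, True)]" for i
  define W where "W = {[(?cs ! 0, True)], [(?cs ! (?m - 1), False)]} \<union> wd ` {..<?m - 1}"
  have satwd: "sat ?cs r (wd i) \<longleftrightarrow> \<not> r ! i \<and> r ! Suc i" if "length r = ?m" "i < ?m - 1" for r i
  proof -
    have "i < ?m" "Suc i < ?m" using that(2) by auto
    thus ?thesis using vl[OF that(1), of i] vl[OF that(1), of "Suc i"] by (simp add: wd_def)
  qed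
  have "\<exists>T'\<in>A. psi_a \<psi> T' \<le> 2 * n \<and> card (essential ?cs (Delta Q) W) \<le> 2 ^ psi_d \<psi> T'"
  proof (rule GEN[OF A psi Q ne])
    show "finite W" "W \<noteq> {}" by (auto simp: W_def)
    show "W \<subseteq> words Q" using csm m2 by (auto simp: W_def wd_def words_def)
    show "psiw \<psi> w \<le> 2 * n" if wW: "w \<in> W" for w
    proof -
      have s: "\<psi> [?cs ! i] \<le> n" if "i < ?m" for i using m_psi_ge[OF csm[OF that], of \<psi>] mq by linarith
      consider "w = [(?cs ! 0, True)]" | "w = [(?cs ! (?m - 1), False)]" | i where "i < ?m - 1" "w = wd i"
        using wW unfolding W_def by blast
      thus ?thesis
      proof cases
        case 1 thus ?thesis using s[of 0] m2 by (simp add: psiw_def)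
      next
        case 2 thus ?thesis using s[of "?m - 1"] m2 by (simp add: psiw_def)
      next
        case 3
        have "\<psi> ([?cs ! i] @ [?cs ! Suc i]) \<le> \<psi> [?cs ! i] + \<psi> [?cs ! Suc i]" by (rule pb(4)[OF psi])
        also have "\<dots> \<le> n + n" using s[of i] s[of "Suc i"] 3(1) by (intro add_mono) auto
        finally show ?thesis using 3 by (simp add: psiw_def wd_def)
      qed
    qed
    show "\<exists>w\<in>W. sat ?cs r w" if rD: "r \<in> Delta Q" for r
    proof -
      have lr: "length r = ?m" using rD DQ by simp
      show ?thesis
      proof (cases "r ! 0")
        case True
        hence "sat ?cs r [(?cs ! 0, True)]" using vl[OF lr, of 0] m2 by simp
        thus ?thesis by (auto simp: W_def)
      next
        case F0: False
        show ?thesis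
        proof (cases "r ! (?m - 1)")
          case False
          hence "sat ?cs r [(?cs ! (?m - 1), False)]" using vl[OF lr, of "?m - 1"] m2 by simp
          thus ?thesis by (auto simp: W_def)
        next
          case True
          define j where "j = (LEAST j. r ! j)"
          have rj: "r ! j" unfolding j_def by (rule LeastI[of _ "?m - 1"]) (rule True)
          have jle: "j \<le> ?m - 1" unfolding j_def by (rule Least_le) (rule True)
          have j0: "j \<noteq> 0"
          proof
            assume "j = 0" thus False using rj F0 by simp
          qed
          have "\<not> r ! (j - 1)" unfolding j_def
            by (rule not_less_Least) (use j0 in \<open>simp add: j_def\<close>)
          moreover have "j - 1 < ?m - 1" using jle j0 by simp
          ultimately have "sat ?cs r (wd (j - 1))" using satwd[OF lr] rj j0 by simp
          moreover have "wd (j - 1) \<in> W" using \<open>j - 1 < ?m - 1\<close> by (auto simp: W_def)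
          ultimately show ?thesis by blast
        qed
      qed
    qed
  qed
  then obtain T' where T': "T' \<in> A" "psi_a \<psi> T' \<le> 2 * n" "card (essential ?cs (Delta Q) W) \<le> 2 ^ psi_d \<psi> T'"
    by blast
  have ess: "wd i \<in> essential ?cs (Delta Q) W" if i: "i < ?m - 1" for i
  proof -
    define r where "r = map (\<lambda>j. i < j) [0..<?m]"
    have lr: "length r = ?m" by (simp add: r_def)
    have rn: "r ! j = (i < j)" if "j < ?m" for j using that by (simp add: r_def)
    have "\<forall>w'\<in>W. sat ?cs r w' \<longleftrightarrow> w' = wd i"
    proof
      fix w' assume "w' \<in> W"
      then consider "w' = [(?cs ! 0, True)]" | "w' = [(?cs ! (?m - 1), False)]" | i' where "i' < ?m - 1" "w' = wd i'"
        unfolding W_def by blast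
      thus "sat ?cs r w' \<longleftrightarrow> w' = wd i"
      proof cases
        case 1 thus ?thesis using vl[OF lr, of 0] rn[of 0] m2 by (simp add: wd_def)
      next
        case 2 thus ?thesis using vl[OF lr, of "?m - 1"] rn[of "?m - 1"] m2 i by (simp add: wd_def)
      next
        case 3
        have i'm: "i' < ?m" "Suc i' < ?m" using 3(1) by auto
        have "sat ?cs r w' \<longleftrightarrow> \<not> (i < i') \<and> i < Suc i'"
          using satwd[OF lr 3(1)] rn[OF i'm(1)] rn[OF i'm(2)] 3(2) by simp
        also have "\<dots> \<longleftrightarrow> i' = i" by linarith
        finally have "sat ?cs r w' \<longleftrightarrow> i' = i" .
        moreover have "wd i' = wd i \<longleftrightarrow> i' = i"
        proof
          assume "wd i' = wd i"
          hence "?cs ! i' = ?cs ! i" by (simp add: wd_def)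
          thus "i' = i" using nth_eq_iff_index_eq[OF dist, of i' i] 3(1) i lm by simp
        qed simp
        ultimately show ?thesis using 3 by simp
      qed
    qed
    moreover have "r \<in> Delta Q" using DQ lr by simp
    moreover have "wd i \<in> W" using i by (auto simp: W_def)
    ultimately show ?thesis unfolding essential_def by blast
  qed
  have inj: "inj_on wd {..<?m - 1}"
  proof (rule inj_onI)
    fix i j assume i: "i \<in> {..<?m - 1}" and j: "j \<in> {..<?m - 1}" and "wd i = wd j"
    hence "?cs ! i = ?cs ! j" by (simp add: wd_def)
    thus "i = j" using nth_eq_iff_index_eq[OF dist, of i j] i j lm by simp
  qed
  have "?m - 1 = card (wd ` {..<?m - 1})" using inj by (simp add: card_image)
  also have "\<dots> \<le> card (essential ?cs (Delta Q) W)"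
  proof (rule card_mono)
    show "finite (essential ?cs (Delta Q) W)"
      by (rule finite_subset[of _ W]) (auto simp: essential_def W_def)
    show "wd ` {..<?m - 1} \<subseteq> essential ?cs (Delta Q) W" using ess by blast
  qed
  finally show ?thesis using T' by auto
qed

lemma psiw_prefix: "bounded_cm \<psi> \<Longrightarrow> psiw \<psi> (take j ls) \<le> psiw \<psi> ls"
proof -
  assume psi: "bounded_cm \<psi>"
  have "psiw \<psi> (take j ls) \<le> psiw \<psi> (take j ls @ drop j ls)"
    unfolding psiw_def map_append by (rule pb(3)[OF psi])
  thus ?thesis by simp
qed

lemma psiw_flip: "psiw \<psi> (take j ls @ [(fst (ls ! j), b)]) = psiw \<psi> (take (Suc j) ls)" if "j < length ls"
  using that by (simp add: psiw_def take_Suc_conv_app_nth)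

locale cst =
  fixes T :: dtable and \<psi> :: "nat list \<Rightarrow> nat" and C :: "nat set" and U :: "(nat \<times> bool) list set" and c :: nat
  assumes wfT: "wf_table T" and psi: "bounded_cm \<psi>"
    and UC: "\<And>\<alpha> x. \<alpha> \<in> U \<Longrightarrow> x \<in> set \<alpha> \<Longrightarrow> fst x \<in> C"
    and Uc: "\<And>\<alpha>. \<alpha> \<in> U \<Longrightarrow> psiw \<psi> \<alpha> \<le> c"
    and UPi: "\<And>\<alpha>. \<alpha> \<in> U \<Longrightarrow> PiT (sub T \<alpha>) \<noteq> {}"
    and Ucov: "\<And>r. r \<in> Delta T \<Longrightarrow> \<exists>\<alpha>\<in>U. sat (fst T) r \<alpha>"
    and Gann: "\<And>s. (\<And>f. f \<notin> C \<Longrightarrow> \<not> s f) \<Longrightarrow> s \<notin> (\<lambda>r f. if f \<in> C then val (fst T) r f else False) ` Delta T \<Longrightarrow>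
       \<exists>\<gamma>. (\<forall>x\<in>set \<gamma>. fst x \<in> C \<and> snd x = s (fst x)) \<and> psiw \<psi> \<gamma> \<le> c \<and> (\<forall>r\<in>Delta T. \<not> sat (fst T) r \<gamma>)"
begin

definition kap :: "row \<Rightarrow> nat \<Rightarrow> bool" where
  "kap r = (\<lambda>f. if f \<in> C then val (fst T) r f else False)"

definition Rw :: "(nat \<times> bool) list \<Rightarrow> row set" where
  "Rw \<beta> = {r \<in> Delta T. sat (fst T) r \<beta>}"

definition good :: "(nat \<times> bool) list \<Rightarrow> nat \<Rightarrow> dtree \<Rightarrow> bool" where
  "good \<beta> k t \<longleftrightarrow> wf_dt t \<and> det_dt t \<and> (\<forall>g. att_in t g \<longrightarrow> g \<in> C)
     \<and> (\<forall>w d. dpath t w d \<longrightarrow> psiw \<psi> w \<le> k * c \<and> (Rw (\<beta> @ w) = {} \<or> d \<in> PiT (sub T (\<beta> @ w))))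
     \<and> (\<forall>r\<in>Rw \<beta>. \<exists>w d. dpath t w d \<and> sat (fst T) r w)"

lemma Rw_fin: "finite (Rw \<beta>)" unfolding Rw_def using Delta_finite by simp

lemma Rw_append: "Rw (a @ b) = {r \<in> Rw a. sat (fst T) r b}"
  unfolding Rw_def by auto

lemma Rw_sub: "Rw \<beta> = Delta (sub T \<beta>)" unfolding Rw_def Delta_sub by simp

lemma sat_kap: "(\<And>x. x \<in> set w \<Longrightarrow> fst x \<in> C) \<Longrightarrow> kap r = kap r' \<Longrightarrow> sat (fst T) r w \<Longrightarrow> sat (fst T) r' w"
proof -
  assume C: "\<And>x. x \<in> set w \<Longrightarrow> fst x \<in> C" and k: "kap r = kap r'" and s: "sat (fst T) r w"
  show "sat (fst T) r' w" unfolding sat_def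
  proof (intro ballI, clarify)
    fix f \<delta> assume fd: "(f, \<delta>) \<in> set w"
    have fC: "f \<in> C" using C[OF fd] by simp
    have "kap r f = kap r' f" using k by simp
    hence "val (fst T) r f = val (fst T) r' f" using fC by (simp add: kap_def)
    moreover have "val (fst T) r f = \<delta>" using s fd by (auto simp: sat_def)
    ultimately show "val (fst T) r' f = \<delta>" by simp
  qed
qed

lemma base_good:
  assumes "card (kap ` Rw \<beta>) \<le> 1"
  shows "\<exists>t. good \<beta> k t"
proof (cases "Rw \<beta> = {}")
  case True
  have "good \<beta> k (Leaf 0)" unfolding good_def using True psiw_Nil[OF psi] by (auto intro: wf_dt.intros det_dt.intros)
  thus ?thesis by blast
next
  case False
  then obtain r0 where r0: "r0 \<in> Rw \<beta>" by blast
  have one: "kap r = kap r0" if "r \<in> Rw \<beta>" for r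
  proof -
    have "finite (kap ` Rw \<beta>)" using Rw_fin by simp
    moreover have "kap r \<in> kap ` Rw \<beta>" "kap r0 \<in> kap ` Rw \<beta>" using that r0 by auto
    moreover have "card (kap ` Rw \<beta>) \<le> Suc 0" using assms by simp
    ultimately show ?thesis using card_le_Suc0_iff_eq by blast
  qed
  obtain \<alpha> where \<alpha>: "\<alpha> \<in> U" "sat (fst T) r0 \<alpha>" using Ucov r0 by (auto simp: Rw_def)
  obtain d where d: "d \<in> PiT (sub T \<alpha>)" using UPi[OF \<alpha>(1)] by blast
  have "d \<in> PiT (sub T \<beta>)"
  proof (rule PiT_sub_mono[OF _ d])
    fix r assume "r \<in> Delta T" "sat (fst T) r \<beta>"
    hence "r \<in> Rw \<beta>" by (simp add: Rw_def)
    thus "sat (fst T) r \<alpha>" using sat_kap[OF _ one[OF \<open>r \<in> Rw \<beta>\<close>, symmetric] \<alpha>(2)] UC[OF \<alpha>(1)] by blast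
  qed
  hence "good \<beta> k (Leaf d)" unfolding good_def using psiw_Nil[OF psi] by (auto intro: wf_dt.intros det_dt.intros)
  thus ?thesis by blast
qed


lemma inner:
  assumes IH: "\<And>\<beta>'. card (kap ` Rw \<beta>') \<le> 2 ^ k' \<Longrightarrow> \<exists>t. good \<beta>' k' t"
    and half: "\<And>\<beta>'' f. f \<in> C \<Longrightarrow> Rw \<beta>'' \<subseteq> Rw \<beta>0 \<Longrightarrow> card (kap ` Rw (\<beta>'' @ [(f, \<not> ds f)])) \<le> 2 ^ k'"
  shows "Rw \<beta> \<subseteq> Rw \<beta>0 \<Longrightarrow> (\<forall>x\<in>set ls. fst x \<in> C \<and> snd x = ds (fst x)) \<Longrightarrow>
    (Rw (\<beta> @ ls) = {} \<or> d \<in> PiT (sub T (\<beta> @ ls))) \<Longrightarrow>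
    \<exists>t. wf_dt t \<and> det_dt t \<and> (\<forall>g. att_in t g \<longrightarrow> g \<in> C) \<and> (\<forall>r\<in>Rw \<beta>. \<exists>w d. dpath t w d \<and> sat (fst T) r w)
      \<and> (\<forall>w d'. dpath t w d' \<longrightarrow> (Rw (\<beta> @ w) = {} \<or> d' \<in> PiT (sub T (\<beta> @ w))) \<and>
            (w = ls \<or> (\<exists>j<length ls. \<exists>w'. w = take j ls @ [(fst (ls ! j), \<not> snd (ls ! j))] @ w' \<and> psiw \<psi> w' \<le> k' * c)))"
proof (induction ls arbitrary: \<beta>)
  case Nil
  have "wf_dt (Leaf d) \<and> det_dt (Leaf d) \<and> (\<forall>g. att_in (Leaf d) g \<longrightarrow> g \<in> C)
      \<and> (\<forall>r\<in>Rw \<beta>. \<exists>w d'. dpath (Leaf d) w d' \<and> sat (fst T) r w)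
      \<and> (\<forall>w d'. dpath (Leaf d) w d' \<longrightarrow> (Rw (\<beta> @ w) = {} \<or> d' \<in> PiT (sub T (\<beta> @ w))) \<and> (w = []
           \<or> (\<exists>j<length ([]::(nat \<times> bool) list). \<exists>w'. w = take j [] @ [(fst ([] ! j), \<not> snd ([] ! j))] @ w' \<and> psiw \<psi> w' \<le> k' * c)))"
    using Nil.prems(3) by (auto intro: wf_dt.intros det_dt.intros)
  thus ?case by blast
next
  case (Cons x ls)
  obtain f \<delta> where x: "x = (f, \<delta>)" by (cases x)
  have fC: "f \<in> C" and \<delta>: "\<delta> = ds f" using Cons.prems(2) x by auto
  have r1: "Rw (\<beta> @ [x]) \<subseteq> Rw \<beta>0" using Cons.prems(1) by (auto simp: Rw_append)
  obtain t1 where t1: "wf_dt t1" "det_dt t1" "\<forall>g. att_in t1 g \<longrightarrow> g \<in> C"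
      "\<forall>r\<in>Rw (\<beta> @ [x]). \<exists>w d. dpath t1 w d \<and> sat (fst T) r w"
      "\<forall>w d'. dpath t1 w d' \<longrightarrow> (Rw ((\<beta> @ [x]) @ w) = {} \<or> d' \<in> PiT (sub T ((\<beta> @ [x]) @ w))) \<and>
            (w = ls \<or> (\<exists>j<length ls. \<exists>w'. w = take j ls @ [(fst (ls ! j), \<not> snd (ls ! j))] @ w' \<and> psiw \<psi> w' \<le> k' * c))"
    using Cons.IH[OF r1] Cons.prems(2,3) by auto
  have "card (kap ` Rw (\<beta> @ [(f, \<not> ds f)])) \<le> 2 ^ k'" using half[OF fC Cons.prems(1)] .
  then obtain t2 where t2: "good (\<beta> @ [(f, \<not> \<delta>)]) k' t2" using IH \<delta> by blast
  have t2': "wf_dt t2" "det_dt t2" "\<forall>g. att_in t2 g \<longrightarrow> g \<in> C"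
     "\<forall>w d. dpath t2 w d \<longrightarrow> psiw \<psi> w \<le> k' * c \<and> (Rw ((\<beta> @ [(f, \<not> \<delta>)]) @ w) = {} \<or> d \<in> PiT (sub T ((\<beta> @ [(f, \<not> \<delta>)]) @ w)))"
     "\<forall>r\<in>Rw (\<beta> @ [(f, \<not> \<delta>)]). \<exists>w d. dpath t2 w d \<and> sat (fst T) r w"
    using t2 unfolding good_def by blast+
  define t where "t = Node f [(\<delta>, t1), (\<not> \<delta>, t2)]"
  have wf: "wf_dt t" unfolding t_def by (rule wf_dt.intros) (use t1 t2' in auto)
  have det: "det_dt t" unfolding t_def by (rule det_dt.intros) (use t1 t2' in auto)
  have att: "\<forall>g. att_in t g \<longrightarrow> g \<in> C" using t1(3) t2'(3) fC by (auto simp: t_def)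
  have cov: "\<forall>r\<in>Rw \<beta>. \<exists>w d. dpath t w d \<and> sat (fst T) r w"
  proof
    fix r assume r: "r \<in> Rw \<beta>"
    show "\<exists>w d. dpath t w d \<and> sat (fst T) r w"
    proof (cases "val (fst T) r f = \<delta>")
      case True
      hence "r \<in> Rw (\<beta> @ [x])" using r x by (simp add: Rw_append)
      then obtain w d where "dpath t1 w d" "sat (fst T) r w" using t1(4) by blast
      hence "dpath t ((f,\<delta>) # w) d \<and> sat (fst T) r ((f,\<delta>) # w)" using True by (auto simp: t_def)
      thus ?thesis by blast
    next
      case False
      hence F: "val (fst T) r f = (\<not> \<delta>)" by simp
      hence "r \<in> Rw (\<beta> @ [(f, \<not> \<delta>)])" using r by (simp add: Rw_append)
      then obtain w d where "dpath t2 w d" "sat (fst T) r w" using t2'(5) by blast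
      hence "dpath t ((f,\<not> \<delta>) # w) d \<and> sat (fst T) r ((f,\<not> \<delta>) # w)" using F by (auto simp: t_def)
      thus ?thesis by blast
    qed
  qed
  have paths: "(Rw (\<beta> @ w) = {} \<or> d' \<in> PiT (sub T (\<beta> @ w))) \<and>
            (w = x # ls \<or> (\<exists>j<length (x # ls). \<exists>w'. w = take j (x # ls) @ [(fst ((x # ls) ! j), \<not> snd ((x # ls) ! j))] @ w' \<and> psiw \<psi> w' \<le> k' * c))"
    if p: "dpath t w d'" for w d'
  proof -
    have "(\<exists>w1. w = (f,\<delta>) # w1 \<and> dpath t1 w1 d') \<or> (\<exists>w2. w = (f, \<not>\<delta>) # w2 \<and> dpath t2 w2 d')"
      using p by (auto simp: t_def)
    thus ?thesis
    proof
      assume "\<exists>w1. w = (f,\<delta>) # w1 \<and> dpath t1 w1 d'"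
      then obtain w1 where w1: "w = (f,\<delta>) # w1" "dpath t1 w1 d'" by blast
      have A: "(Rw ((\<beta> @ [x]) @ w1) = {} \<or> d' \<in> PiT (sub T ((\<beta> @ [x]) @ w1)))"
        and B: "(w1 = ls \<or> (\<exists>j<length ls. \<exists>w'. w1 = take j ls @ [(fst (ls ! j), \<not> snd (ls ! j))] @ w' \<and> psiw \<psi> w' \<le> k' * c))"
        using t1(5) w1(2) by blast+
      have "(\<beta> @ [x]) @ w1 = \<beta> @ w" using w1 x by simp
      hence A': "Rw (\<beta> @ w) = {} \<or> d' \<in> PiT (sub T (\<beta> @ w))" using A by simp
      from B have "w = x # ls \<or> (\<exists>j<length (x # ls). \<exists>w'. w = take j (x # ls) @ [(fst ((x # ls) ! j), \<not> snd ((x # ls) ! j))] @ w' \<and> psiw \<psi> w' \<le> k' * c)"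
      proof
        assume "w1 = ls" thus ?thesis using w1 x by simp
      next
        assume "\<exists>j<length ls. \<exists>w'. w1 = take j ls @ [(fst (ls ! j), \<not> snd (ls ! j))] @ w' \<and> psiw \<psi> w' \<le> k' * c"
        then obtain j w' where j: "j < length ls" "w1 = take j ls @ [(fst (ls ! j), \<not> snd (ls ! j))] @ w'" "psiw \<psi> w' \<le> k' * c"
          by blast
        have "w = take (Suc j) (x # ls) @ [(fst ((x # ls) ! Suc j), \<not> snd ((x # ls) ! Suc j))] @ w'"
          using w1(1) j(2) x by simp
        moreover have "Suc j < length (x # ls)" using j(1) by simp
        ultimately show ?thesis using j(3) by blast
      qed
      thus ?thesis using A' by blast
    next
      assume "\<exists>w2. w = (f, \<not>\<delta>) # w2 \<and> dpath t2 w2 d'"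
      then obtain w2 where w2: "w = (f, \<not>\<delta>) # w2" "dpath t2 w2 d'" by blast
      have A: "psiw \<psi> w2 \<le> k' * c" "Rw ((\<beta> @ [(f, \<not> \<delta>)]) @ w2) = {} \<or> d' \<in> PiT (sub T ((\<beta> @ [(f, \<not> \<delta>)]) @ w2))"
        using t2'(4) w2(2) by blast+
      have "(\<beta> @ [(f, \<not> \<delta>)]) @ w2 = \<beta> @ w" using w2 by simp
      hence A': "Rw (\<beta> @ w) = {} \<or> d' \<in> PiT (sub T (\<beta> @ w))" using A(2) by simp
      have "w = take 0 (x # ls) @ [(fst ((x # ls) ! 0), \<not> snd ((x # ls) ! 0))] @ w2" using w2 x by simp
      hence "\<exists>j<length (x # ls). \<exists>w'. w = take j (x # ls) @ [(fst ((x # ls) ! j), \<not> snd ((x # ls) ! j))] @ w' \<and> psiw \<psi> w' \<le> k' * c"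
        using A(1) by (intro exI[of _ 0]) auto
      thus ?thesis using A' by blast
    qed
  qed
  show ?case using wf det att cov paths by blast
qed

lemma card_split: "finite S \<Longrightarrow> card {s\<in>S. P s} + card {s\<in>S. \<not> P s} = card S"
proof -
  assume fin: "finite S"
  have "S = {s\<in>S. P s} \<union> {s\<in>S. \<not> P s}" by blast
  moreover have "card ({s\<in>S. P s} \<union> {s\<in>S. \<not> P s}) = card {s\<in>S. P s} + card {s\<in>S. \<not> P s}"
    by (rule card_Un_disjoint) (use fin in auto)
  ultimately show ?thesis by simp
qed

lemma good_all: "card (kap ` Rw \<beta>) \<le> 2 ^ k \<Longrightarrow> \<exists>t. good \<beta> k t"
proof (induction k arbitrary: \<beta>)
  case 0 thus ?case using base_good by simp
next
  case (Suc k')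
  show ?case
  proof (cases "card (kap ` Rw \<beta>) \<le> 1")
    case True thus ?thesis using base_good by blast
  next
    case False
    define S0 where "S0 = kap ` Rw \<beta>"
    define N where "N = card S0"
    have finS0: "finite S0" unfolding S0_def using Rw_fin by simp
    have NS: "N \<le> 2 * 2 ^ k'" using Suc.prems by (simp add: N_def S0_def)
    define ds where "ds f = (if f \<in> C then N \<le> 2 * card {s\<in>S0. s f} else False)" for f
    have halving: "2 * card {s\<in>S0. s f \<noteq> ds f} \<le> N" if fC: "f \<in> C" for f
    proof -
      have sp: "card {s\<in>S0. s f} + card {s\<in>S0. \<not> s f} = N" unfolding N_def by (rule card_split[OF finS0])
      show ?thesis
      proof (cases "N \<le> 2 * card {s\<in>S0. s f}")
        case True
        hence "ds f" using fC by (simp add: ds_def)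
        hence "{s\<in>S0. s f \<noteq> ds f} = {s\<in>S0. \<not> s f}" by auto
        thus ?thesis using sp True by simp
      next
        case False
        hence "\<not> ds f" using fC by (simp add: ds_def)
        hence "{s\<in>S0. s f \<noteq> ds f} = {s\<in>S0. s f}" by auto
        thus ?thesis using sp False by simp
      qed
    qed
    have half: "card (kap ` Rw (\<beta>'' @ [(f, \<not> ds f)])) \<le> 2 ^ k'" if fC: "f \<in> C" and sub: "Rw \<beta>'' \<subseteq> Rw \<beta>" for \<beta>'' f
    proof -
      have "kap ` Rw (\<beta>'' @ [(f, \<not> ds f)]) \<subseteq> {s\<in>S0. s f \<noteq> ds f}"
      proof
        fix s assume "s \<in> kap ` Rw (\<beta>'' @ [(f, \<not> ds f)])"
        then obtain r where r: "r \<in> Rw (\<beta>'' @ [(f, \<not> ds f)])" "s = kap r" by blast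
        have "r \<in> Rw \<beta>" "val (fst T) r f = (\<not> ds f)" using r(1) sub by (auto simp: Rw_append)
        thus "s \<in> {s\<in>S0. s f \<noteq> ds f}" using r(2) fC by (auto simp: S0_def kap_def)
      qed
      hence "card (kap ` Rw (\<beta>'' @ [(f, \<not> ds f)])) \<le> card {s\<in>S0. s f \<noteq> ds f}"
        by (rule card_mono[rotated]) (use finS0 in simp)
      thus ?thesis using halving[OF fC] NS by linarith
    qed
    have ih: "\<And>\<beta>'. card (kap ` Rw \<beta>') \<le> 2 ^ k' \<Longrightarrow> \<exists>t. good \<beta>' k' t" using Suc.IH by blast
    obtain ls d where ls: "\<forall>x\<in>set ls. fst x \<in> C \<and> snd x = ds (fst x)" "psiw \<psi> ls \<le> c"
      "Rw (\<beta> @ ls) = {} \<or> d \<in> PiT (sub T (\<beta> @ ls))"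
    proof (cases "ds \<in> kap ` Delta T")
      case True
      then obtain r where r: "r \<in> Delta T" "kap r = ds" by blast
      obtain \<alpha> where \<alpha>: "\<alpha> \<in> U" "sat (fst T) r \<alpha>" using Ucov[OF r(1)] by blast
      have l1: "\<forall>x\<in>set \<alpha>. fst x \<in> C \<and> snd x = ds (fst x)"
      proof
        fix x assume x: "x \<in> set \<alpha>"
        have fC: "fst x \<in> C" using UC[OF \<alpha>(1) x] .
        have "val (fst T) r (fst x) = snd x" using \<alpha>(2) x by (cases x) (auto simp: sat_def)
        thus "fst x \<in> C \<and> snd x = ds (fst x)" using fC r(2) by (auto simp: kap_def)
      qed
      obtain d where d: "d \<in> PiT (sub T \<alpha>)" using UPi[OF \<alpha>(1)] by blast
      have "d \<in> PiT (sub T (\<beta> @ \<alpha>))" by (rule PiT_sub_mono[OF _ d]) simp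
      thus ?thesis using that[OF l1 Uc[OF \<alpha>(1)]] by blast
    next
      case False
      obtain \<gamma> where \<gamma>: "\<forall>x\<in>set \<gamma>. fst x \<in> C \<and> snd x = ds (fst x)" "psiw \<psi> \<gamma> \<le> c" "\<forall>r\<in>Delta T. \<not> sat (fst T) r \<gamma>"
        using Gann[of ds] False unfolding kap_def[abs_def] ds_def by auto
      have "Rw (\<beta> @ \<gamma>) = {}" using \<gamma>(3) by (auto simp: Rw_def)
      thus ?thesis using that[OF \<gamma>(1,2)] by blast
    qed
    obtain t where t: "wf_dt t" "det_dt t" "\<forall>g. att_in t g \<longrightarrow> g \<in> C" "\<forall>r\<in>Rw \<beta>. \<exists>w d. dpath t w d \<and> sat (fst T) r w"
      "\<forall>w d'. dpath t w d' \<longrightarrow> (Rw (\<beta> @ w) = {} \<or> d' \<in> PiT (sub T (\<beta> @ w))) \<and>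
            (w = ls \<or> (\<exists>j<length ls. \<exists>w'. w = take j ls @ [(fst (ls ! j), \<not> snd (ls ! j))] @ w' \<and> psiw \<psi> w' \<le> k' * c))"
      using inner[of k' \<beta> ds, OF ih half, of \<beta> ls d] ls(1,3) by blast
    have cost: "psiw \<psi> w \<le> Suc k' * c" if p: "dpath t w d'" for w d'
    proof -
      have "w = ls \<or> (\<exists>j<length ls. \<exists>w'. w = take j ls @ [(fst (ls ! j), \<not> snd (ls ! j))] @ w' \<and> psiw \<psi> w' \<le> k' * c)"
        using t(5) p by blast
      thus ?thesis
      proof
        assume "w = ls" thus ?thesis using ls(2) by simp
      next
        assume "\<exists>j<length ls. \<exists>w'. w = take j ls @ [(fst (ls ! j), \<not> snd (ls ! j))] @ w' \<and> psiw \<psi> w' \<le> k' * c"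
        then obtain j w' where j: "j < length ls" "w = (take j ls @ [(fst (ls ! j), \<not> snd (ls ! j))]) @ w'" "psiw \<psi> w' \<le> k' * c"
          by auto
        have "psiw \<psi> w \<le> psiw \<psi> (take j ls @ [(fst (ls ! j), \<not> snd (ls ! j))]) + psiw \<psi> w'"
          unfolding j(2) by (rule psiw_append[OF psi])
        also have "psiw \<psi> (take j ls @ [(fst (ls ! j), \<not> snd (ls ! j))]) = psiw \<psi> (take (Suc j) ls)"
          by (rule psiw_flip[OF j(1)])
        also have "\<dots> \<le> psiw \<psi> ls" by (rule psiw_prefix[OF psi])
        finally show ?thesis using ls(2) j(3) by simp
      qed
    qed
    have "good \<beta> (Suc k') t" unfolding good_def using t cost by blast
    thus ?thesis by blast
  qed
qed

end

definition shat :: "'a set set \<Rightarrow> 'a set \<Rightarrow> bool" where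
  "shat F S \<longleftrightarrow> (\<lambda>A. A \<inter> S) ` F = Pow S"

lemma pajor:
  "finite X \<Longrightarrow> F \<subseteq> Pow X \<Longrightarrow> card F \<le> card {S. S \<subseteq> X \<and> shat F S}"
proof (induction X arbitrary: F rule: finite_induct)
  case empty
  show ?case
  proof (cases "F = {}")
    case True thus ?thesis by simp
  next
    case False
    hence F: "F = {{}}" using empty by auto
    have "{S. S \<subseteq> {} \<and> shat F S} = {{}}" by (auto simp: shat_def F)
    thus ?thesis using F by simp
  qed
next
  case (insert x X)
  let ?Fa = "(\<lambda>A. A - {x}) ` F"
  let ?Fb = "{B \<in> Pow X. B \<in> F \<and> insert x B \<in> F}"
  let ?Ga = "{A\<in>F. x \<notin> A}"
  let ?Gb = "{A\<in>F. x \<in> A}"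
  have "finite (Pow (insert x X))" using insert.hyps(1) by simp
  hence finF: "finite F" by (rule finite_subset[OF insert.prems])
  have F0sub: "?Fa \<subseteq> Pow X" using insert.prems by auto
  have F1sub: "?Fb \<subseteq> Pow X" by blast
  have cG: "card F = card ?Ga + card ?Gb"
  proof -
    have "F = ?Ga \<union> ?Gb" by blast
    moreover have "card (?Ga \<union> ?Gb) = card ?Ga + card ?Gb" by (rule card_Un_disjoint) (use finF in auto)
    ultimately show ?thesis by simp
  qed
  have F0eq: "?Fa = ?Ga \<union> (\<lambda>A. A - {x}) ` ?Gb"
  proof (intro equalityI subsetI)
    fix B assume "B \<in> ?Fa"
    then obtain A where A: "A \<in> F" "B = A - {x}" by blast
    show "B \<in> ?Ga \<union> (\<lambda>A. A - {x}) ` ?Gb"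
    proof (cases "x \<in> A")
      case True thus ?thesis using A by blast
    next
      case False hence "B = A" using A by simp
      thus ?thesis using A False by blast
    qed
  next
    fix B assume "B \<in> ?Ga \<union> (\<lambda>A. A - {x}) ` ?Gb"
    thus "B \<in> ?Fa"
    proof
      assume "B \<in> ?Ga" hence "B \<in> F" "B - {x} = B" by auto
      thus "B \<in> ?Fa" by (intro image_eqI[of B _ B]) auto
    qed blast
  qed
  have injG1: "inj_on (\<lambda>A. A - {x}) ?Gb"
  proof (rule inj_onI)
    fix A1 A2 assume "A1 \<in> ?Gb" "A2 \<in> ?Gb" "A1 - {x} = A2 - {x}"
    moreover have "A1 = insert x (A1 - {x})" "A2 = insert x (A2 - {x})" using calculation by auto
    ultimately show "A1 = A2" by simp
  qed
  have IntEq: "?Ga \<inter> (\<lambda>A. A - {x}) ` ?Gb = ?Fb"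
  proof (intro equalityI subsetI)
    fix B assume B: "B \<in> ?Ga \<inter> (\<lambda>A. A - {x}) ` ?Gb"
    then obtain A where A: "A \<in> F" "x \<in> A" "B = A - {x}" by blast
    have "insert x B = A" using A by auto
    moreover have "B \<subseteq> X" using B insert.prems by auto
    ultimately show "B \<in> ?Fb" using A B by auto
  next
    fix B assume B: "B \<in> ?Fb"
    hence xB: "x \<notin> B" using insert.hyps(2) by auto
    hence "B = insert x B - {x}" by simp
    thus "B \<in> ?Ga \<inter> (\<lambda>A. A - {x}) ` ?Gb" using B xB by blast
  qed
  have cF: "card F = card ?Fa + card ?Fb"
  proof -
    have "card ?Ga + card ((\<lambda>A. A - {x}) ` ?Gb) = card (?Ga \<union> (\<lambda>A. A - {x}) ` ?Gb) + card (?Ga \<inter> (\<lambda>A. A - {x}) ` ?Gb)"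
      by (rule card_Un_Int) (use finF in auto)
    thus ?thesis using cG F0eq IntEq card_image[OF injG1] by simp
  qed
  let ?SHa = "{S. S \<subseteq> X \<and> shat ?Fa S}"
  let ?SHb = "{S. S \<subseteq> X \<and> shat ?Fb S}"
  let ?SH = "{S. S \<subseteq> insert x X \<and> shat F S}"
  have i0: "card ?Fa \<le> card ?SHa" by (rule insert.IH[OF F0sub])
  have i1: "card ?Fb \<le> card ?SHb" by (rule insert.IH[OF F1sub])
  have s0: "?SHa \<subseteq> ?SH"
  proof
    fix S assume S: "S \<in> ?SHa"
    have xS: "x \<notin> S" using S insert.hyps(2) by auto
    have "(\<lambda>A. A \<inter> S) ` F = (\<lambda>A. A \<inter> S) ` ?Fa"
    proof -
      have "(\<lambda>A. A \<inter> S) ` ?Fa = (\<lambda>A. (A - {x}) \<inter> S) ` F" by (simp add: image_image)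
      also have "\<dots> = (\<lambda>A. A \<inter> S) ` F" using xS by (intro image_cong) auto
      finally show ?thesis by simp
    qed
    thus "S \<in> ?SH" using S by (auto simp: shat_def)
  qed
  have s1: "insert x ` ?SHb \<subseteq> ?SH"
  proof
    fix S' assume "S' \<in> insert x ` ?SHb"
    then obtain S where S: "S \<subseteq> X" "shat ?Fb S" "S' = insert x S" by blast
    have "(\<lambda>A. A \<inter> insert x S) ` F = Pow (insert x S)"
    proof (intro equalityI subsetI)
      fix T assume "T \<in> (\<lambda>A. A \<inter> insert x S) ` F" thus "T \<in> Pow (insert x S)" by auto
    next
      fix T assume T: "T \<in> Pow (insert x S)"
      hence "T - {x} \<in> Pow S" by auto
      hence "T - {x} \<in> (\<lambda>A. A \<inter> S) ` ?Fb" using S(2) unfolding shat_def by simp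
      then obtain B where B: "B \<in> ?Fb" "T - {x} = B \<inter> S" by blast
      have xB: "x \<notin> B" using B(1) insert.hyps(2) by auto
      show "T \<in> (\<lambda>A. A \<inter> insert x S) ` F"
      proof (cases "x \<in> T")
        case True
        have "insert x B \<inter> insert x S = T" using True B(2) by auto
        moreover have "insert x B \<in> F" using B(1) by simp
        ultimately show ?thesis by (intro image_eqI[of T _ "insert x B"]) auto
      next
        case False
        have "B \<inter> insert x S = T" using False B(2) xB by auto
        moreover have "B \<in> F" using B(1) by simp
        ultimately show ?thesis by (intro image_eqI[of T _ B]) auto
      qed
    qed
    thus "S' \<in> ?SH" using S by (auto simp: shat_def)
  qed
  have disj: "?SHa \<inter> insert x ` ?SHb = {}" using insert.hyps(2) by auto
  have "?SH \<subseteq> Pow (insert x X)" by blast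
  hence finSH: "finite ?SH" by (rule finite_subset) (use insert.hyps(1) in simp)
  have injx: "inj_on (insert x) ?SHb"
  proof (rule inj_onI)
    fix S1 S2 assume a: "S1 \<in> ?SHb" "S2 \<in> ?SHb" "insert x S1 = insert x S2"
    hence "x \<notin> S1" "x \<notin> S2" using insert.hyps(2) by auto
    hence "S1 = insert x S1 - {x}" "S2 = insert x S2 - {x}" by auto
    thus "S1 = S2" using a(3) by simp
  qed
  have "card F \<le> card ?SHa + card ?SHb" using cF i0 i1 by simp
  also have "\<dots> = card ?SHa + card (insert x ` ?SHb)" using card_image[OF injx] by simp
  also have "\<dots> = card (?SHa \<union> insert x ` ?SHb)"
  proof (rule card_Un_disjoint[symmetric])
    show "finite ?SHa" by (rule finite_subset[OF s0 finSH])
    show "finite (insert x ` ?SHb)" by (rule finite_subset[OF s1 finSH])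
    show "?SHa \<inter> insert x ` ?SHb = {}" by (rule disj)
  qed
  also have "\<dots> \<le> card ?SH" by (rule card_mono[OF finSH]) (use s0 s1 in blast)
  finally show ?case .
qed

lemma count_small:
  assumes "finite X" shows "card {S. S \<subseteq> X \<and> card S \<le> z} \<le> (card X + 1) ^ z"
proof (induction z)
  case 0
  have "{S. S \<subseteq> X \<and> card S \<le> 0} = {{}}"
  proof (intro equalityI subsetI)
    fix S assume "S \<in> {S. S \<subseteq> X \<and> card S \<le> 0}"
    moreover hence "finite S" using assms rev_finite_subset by blast
    ultimately show "S \<in> {{}}" by simp
  qed simp
  thus ?case by simp
next
  case (Suc z)
  let ?Sz = "{S. S \<subseteq> X \<and> card S \<le> z}"
  have "?Sz \<subseteq> Pow X" by blast
  hence finSz: "finite ?Sz" by (rule finite_subset) (use assms in simp)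
  have "{S. S \<subseteq> X \<and> card S \<le> Suc z} \<subseteq> ?Sz \<union> (\<lambda>p. insert (fst p) (snd p)) ` (X \<times> ?Sz)"
  proof
    fix S assume S: "S \<in> {S. S \<subseteq> X \<and> card S \<le> Suc z}"
    show "S \<in> ?Sz \<union> (\<lambda>p. insert (fst p) (snd p)) ` (X \<times> ?Sz)"
    proof (cases "card S \<le> z")
      case True thus ?thesis using S by blast
    next
      case False
      hence cS: "card S = Suc z" using S by simp
      hence "S \<noteq> {}" by auto
      then obtain x where x: "x \<in> S" by blast
      have fS: "finite S" using S assms by (auto intro: finite_subset)
      have "card (S - {x}) = z" using cS x fS by simp
      hence "(x, S - {x}) \<in> X \<times> ?Sz" using S x by auto
      moreover have "S = insert (fst (x, S - {x})) (snd (x, S - {x}))" using x by auto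
      ultimately show ?thesis by blast
    qed
  qed
  hence "card {S. S \<subseteq> X \<and> card S \<le> Suc z} \<le> card (?Sz \<union> (\<lambda>p. insert (fst p) (snd p)) ` (X \<times> ?Sz))"
  proof (rule card_mono[rotated])
    show "finite (?Sz \<union> (\<lambda>p. insert (fst p) (snd p)) ` (X \<times> ?Sz))" using finSz assms by simp
  qed
  also have "\<dots> \<le> card ?Sz + card ((\<lambda>p. insert (fst p) (snd p)) ` (X \<times> ?Sz))" by (rule card_Un_le)
  also have "\<dots> \<le> card ?Sz + card (X \<times> ?Sz)"
  proof -
    have "finite (X \<times> ?Sz)" using finSz assms by simp
    hence "card ((\<lambda>p. insert (fst p) (snd p)) ` (X \<times> ?Sz)) \<le> card (X \<times> ?Sz)" by (rule card_image_le)
    thus ?thesis by simp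
  qed
  also have "\<dots> = card ?Sz * (card X + 1)" by (simp add: card_cartesian_product)
  also have "\<dots> \<le> (card X + 1) ^ z * (card X + 1)" using Suc.IH by (rule mult_right_mono) simp
  finally show ?case by (simp add: mult.commute)
qed

lemma words_psi_finite:
  assumes psi: "bounded_cm \<psi>"
  shows "finite {\<alpha> \<in> words T. psiw \<psi> \<alpha> \<le> n}"
proof -
  have "{\<alpha> \<in> words T. psiw \<psi> \<alpha> \<le> n} \<subseteq> {xs. set xs \<subseteq> atts T \<times> UNIV \<and> length xs \<le> n}"
  proof
    fix \<alpha> assume a: "\<alpha> \<in> {\<alpha> \<in> words T. psiw \<psi> \<alpha> \<le> n}"
    hence "length \<alpha> \<le> n" using psiw_len[OF psi, of \<alpha>] by simp
    moreover have "set \<alpha> \<subseteq> atts T \<times> UNIV" using a by (auto simp: words_def)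
    ultimately show "\<alpha> \<in> {xs. set xs \<subseteq> atts T \<times> UNIV \<and> length xs \<le> n}" by simp
  qed
  moreover have "finite {xs. set xs \<subseteq> atts T \<times> (UNIV :: bool set) \<and> length xs \<le> n}"
    by (rule finite_lists_length_le) simp
  ultimately show ?thesis by (rule finite_subset)
qed

lemma irr_card_le:
  assumes psi: "bounded_cm \<psi>" and "irr_psi_cover \<psi> T n U"
  shows "card U \<le> card {\<alpha> \<in> words T. psiw \<psi> \<alpha> \<le> n}"
  by (rule card_mono[OF words_psi_finite[OF psi]]) (use assms(2) in \<open>simp add: irr_psi_cover_def psi_cover_def\<close>)

lemma irr_cards_finite:
  assumes psi: "bounded_cm \<psi>"
  shows "finite {card U | U. irr_psi_cover \<psi> T n U}"
proof -
  have "{card U | U. irr_psi_cover \<psi> T n U} \<subseteq> {..card {\<alpha> \<in> words T. psiw \<psi> \<alpha> \<le> n}}"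
    using irr_card_le[OF psi, of T n] by fastforce
  thus ?thesis by (rule finite_subset) simp
qed

lemma Nil_irr:
  assumes psi: "bounded_cm \<psi>" and ne: "\<not> is_empty T"
  shows "irr_psi_cover \<psi> T n {[]}"
proof -
  have "psi_cover \<psi> T n {[]}" using psiw_Nil[OF psi]
    by (simp add: psi_cover_def words_def Delta_sub)
  moreover have "\<not> psi_cover \<psi> T n V" if "V \<subset> {[]}" for V
  proof -
    have "V = {}" using that by auto
    thus ?thesis using ne by (simp add: psi_cover_def is_empty_iff)
  qed
  ultimately show ?thesis by (simp add: irr_psi_cover_def)
qed

lemma l_psi_ge:
  assumes psi: "bounded_cm \<psi>" and ne: "\<not> is_empty T" and U: "irr_psi_cover \<psi> T n U"
  shows "card U \<le> l_psi \<psi> T n"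
  unfolding l_psi_def using ne by (simp, intro Max_ge) (use irr_cards_finite[OF psi] U in auto)

lemma l_psi_pos:
  assumes psi: "bounded_cm \<psi>" and ne: "\<not> is_empty T"
  shows "1 \<le> l_psi \<psi> T n"
  using l_psi_ge[OF psi ne Nil_irr[OF psi ne]] by simp

lemma l_psi_le:
  assumes psi: "bounded_cm \<psi>" and B: "\<And>U. irr_psi_cover \<psi> T n U \<Longrightarrow> card U \<le> B"
  shows "l_psi \<psi> T n \<le> B"
proof (cases "is_empty T")
  case True thus ?thesis by (simp add: l_psi_def)
next
  case False
  have "Max {card U | U. irr_psi_cover \<psi> T n U} \<le> B"
  proof (rule Max.boundedI)
    show "finite {card U | U. irr_psi_cover \<psi> T n U}" by (rule irr_cards_finite[OF psi])
    show "{card U | U. irr_psi_cover \<psi> T n U} \<noteq> {}" using Nil_irr[OF psi False, of n] by blast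
    show "\<And>a. a \<in> {card U | U. irr_psi_cover \<psi> T n U} \<Longrightarrow> a \<le> B" using B by blast
  qed
  thus ?thesis using False by (simp add: l_psi_def)
qed

lemma atts_tclosure: "Q \<in> tclosure T \<Longrightarrow> atts Q \<subseteq> atts T"
proof -
  assume "Q \<in> tclosure T"
  then obtain D \<nu> where "Q = J_op \<nu> (I_op D T)" unfolding tclosure_def by blast
  thus ?thesis using atts_I[of D T] by simp
qed

lemma Zt_finite: "finite {card (atts Q) | Q. Q \<in> tclosure T \<and> complete_table Q}"
proof -
  have "{card (atts Q) | Q. Q \<in> tclosure T \<and> complete_table Q} \<subseteq> {..card (atts T)}"
  proof
    fix x assume "x \<in> {card (atts Q) | Q. Q \<in> tclosure T \<and> complete_table Q}"
    then obtain Q where Q: "Q \<in> tclosure T" "x = card (atts Q)" by blast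
    have "card (atts Q) \<le> card (atts T)" by (rule card_mono[OF finite_atts atts_tclosure[OF Q(1)]])
    thus "x \<in> {..card (atts T)}" using Q by simp
  qed
  thus ?thesis by (rule finite_subset) simp
qed

lemma Zt_ge: "Q \<in> tclosure T \<Longrightarrow> complete_table Q \<Longrightarrow> card (atts Q) \<le> Zt T"
proof -
  assume "Q \<in> tclosure T" "complete_table Q"
  hence "card (atts Q) \<in> insert 0 {card (atts Q) | Q. Q \<in> tclosure T \<and> complete_table Q}" by blast
  thus ?thesis unfolding Zt_def by (rule Max_ge[rotated]) (use Zt_finite[of T] in simp)
qed

lemma Zt_cases: "Zt T = 0 \<or> (\<exists>Q\<in>tclosure T. complete_table Q \<and> Zt T = card (atts Q))"
proof -
  have "Zt T \<in> insert 0 {card (atts Q) | Q. Q \<in> tclosure T \<and> complete_table Q}"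
    unfolding Zt_def by (rule Max_in) (use Zt_finite[of T] in auto)
  thus ?thesis by auto
qed

lemma Gt_ge:
  assumes "\<not> is_empty T" "finite {length \<alpha> | \<alpha>. irr_annihilating T \<alpha>}" "irr_annihilating T \<alpha>"
  shows "length \<alpha> \<le> Gt T"
  unfolding Gt_def using assms by (simp, intro Max_ge) auto

lemma Gt_le:
  assumes "\<And>\<alpha>. irr_annihilating T \<alpha> \<Longrightarrow> length \<alpha> \<le> B"
  shows "Gt T \<le> B"
proof (cases "is_empty T")
  case True thus ?thesis by (simp add: Gt_def)
next
  case False
  have fin: "finite {length \<alpha> | \<alpha>. irr_annihilating T \<alpha>}"
    by (rule finite_subset[of _ "{..B}"]) (use assms in auto)
  have "Max (insert 0 {length \<alpha> | \<alpha>. irr_annihilating T \<alpha>}) \<le> B"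
    by (rule Max.boundedI) (use fin assms in auto)
  thus ?thesis using False by (simp add: Gt_def)
qed

lemma projD_eq:
  assumes wf: "wf_table T" and r: "r \<in> Delta T" and r': "r' \<in> Delta T"
  shows "projD (fst T) (atts T - S) r = projD (fst T) (atts T - S) r' \<longleftrightarrow> (\<forall>f\<in>S \<inter> atts T. val (fst T) r f = val (fst T) r' f)"
proof -
  let ?cs = "fst T" and ?D = "atts T - S"
  have dist: "distinct ?cs" using wfD(1)[OF wf] .
  have lr: "length r = length ?cs" "length r' = length ?cs" using Delta_len[OF wf] r r' by auto
  have kp: "?cs ! i \<in> S \<inter> atts T" "i < length ?cs" if "i \<in> set (keepD ?cs ?D)" for i
    using that by (auto simp: keepD_def atts_def)
  show ?thesis
  proof
    assume eq: "projD ?cs ?D r = projD ?cs ?D r'"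
    show "\<forall>f\<in>S \<inter> atts T. val ?cs r f = val ?cs r' f"
    proof
      fix f assume f: "f \<in> S \<inter> atts T"
      have "f \<notin> ?D" using f by blast
      hence "val (map (\<lambda>i. ?cs ! i) (keepD ?cs ?D)) (projD ?cs ?D r) f = val ?cs r f"
        "val (map (\<lambda>i. ?cs ! i) (keepD ?cs ?D)) (projD ?cs ?D r') f = val ?cs r' f"
        using val_I[OF dist lr(1)] val_I[OF dist lr(2)] f by auto
      thus "val ?cs r f = val ?cs r' f" using eq by simp
    qed
  next
    assume all: "\<forall>f\<in>S \<inter> atts T. val ?cs r f = val ?cs r' f"
    show "projD ?cs ?D r = projD ?cs ?D r'"
    proof (rule nth_equalityI)
      show "length (projD ?cs ?D r) = length (projD ?cs ?D r')" by (simp add: projD_def)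
      fix j assume "j < length (projD ?cs ?D r)"
      hence j: "j < length (keepD ?cs ?D)" by (simp add: projD_def)
      let ?i = "keepD ?cs ?D ! j"
      have ii: "?i \<in> set (keepD ?cs ?D)" using j by simp
      have "r ! ?i = val ?cs r (?cs ! ?i)" "r' ! ?i = val ?cs r' (?cs ! ?i)"
        using val_nth[OF dist lr(1) kp(2)[OF ii]] val_nth[OF dist lr(2) kp(2)[OF ii]] by auto
      hence "r ! ?i = r' ! ?i" using all kp(1)[OF ii] by simp
      thus "projD ?cs ?D r ! j = projD ?cs ?D r' ! j" using j by (simp add: projD_def)
    qed
  qed
qed

lemma card_image_eq:
  assumes "\<And>x y. x \<in> R \<Longrightarrow> y \<in> R \<Longrightarrow> f x = f y \<longleftrightarrow> g x = g y"
  shows "card (f ` R) = card (g ` R)"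
proof -
  have "bij_betw (\<lambda>a. g (SOME x. x \<in> R \<and> f x = a)) (f ` R) (g ` R)"
  proof (rule bij_betw_imageI)
    have sm: "(SOME x. x \<in> R \<and> f x = f y) \<in> R \<and> f (SOME x. x \<in> R \<and> f x = f y) = f y" if "y \<in> R" for y
      by (rule someI[of _ y]) (use that in simp)
    show "inj_on (\<lambda>a. g (SOME x. x \<in> R \<and> f x = a)) (f ` R)"
    proof (rule inj_onI)
      fix a b assume "a \<in> f ` R" "b \<in> f ` R" and eq: "g (SOME x. x \<in> R \<and> f x = a) = g (SOME x. x \<in> R \<and> f x = b)"
      then obtain y z where y: "y \<in> R" "a = f y" and z: "z \<in> R" "b = f z" by blast
      show "a = b" using sm[OF y(1)] sm[OF z(1)] eq y z assms by metis
    qed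
    show "(\<lambda>a. g (SOME x. x \<in> R \<and> f x = a)) ` f ` R = g ` R"
    proof (intro equalityI subsetI)
      fix b assume "b \<in> (\<lambda>a. g (SOME x. x \<in> R \<and> f x = a)) ` f ` R"
      then obtain y where y: "y \<in> R" "b = g (SOME x. x \<in> R \<and> f x = f y)" by blast
      thus "b \<in> g ` R" using sm[OF y(1)] by blast
    next
      fix b assume "b \<in> g ` R"
      then obtain y where y: "y \<in> R" "b = g y" by blast
      have "g (SOME x. x \<in> R \<and> f x = f y) = g y" using sm[OF y(1)] y(1) assms by blast
      thus "b \<in> (\<lambda>a. g (SOME x. x \<in> R \<and> f x = a)) ` f ` R" using y by force
    qed
  qed
  thus ?thesis by (rule bij_betw_same_card)
qed

lemma restrict_table:
  assumes A: "closed_class A" and T: "T \<in> A" and S: "S \<subseteq> atts T" "S \<noteq> {}"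
  defines "TS \<equiv> J_op (\<lambda>_. {0}) (I_op (atts T - S) T)"
  shows "TS \<in> A" "atts TS = S" "wf_table TS" "fst TS \<noteq> []"
    "Delta TS = projD (fst T) (atts T - S) ` Delta T"
proof -
  show TSA: "TS \<in> A" unfolding TS_def by (rule closed_JI[OF A T]) auto
  show at: "atts TS = S" unfolding TS_def using atts_I[of "atts T - S" T] S(1) by auto
  show "wf_table TS" by (rule closed_wf[OF A TSA])
  show "fst TS \<noteq> []" using at S(2) by (auto simp: atts_def)
  have "\<not> atts T \<subseteq> atts T - S" using S by auto
  thus "Delta TS = projD (fst T) (atts T - S) ` Delta T" unfolding TS_def by (simp add: Delta_I)
qed

lemma classes_bound:
  assumes A: "closed_class A" and T: "T \<in> A" and C: "C \<subseteq> atts T" and Cn: "\<And>f. f \<in> C \<Longrightarrow> \<psi> [f] \<le> n"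
    and Zb: "\<And>Q. Q \<in> A \<Longrightarrow> m_psi \<psi> Q \<le> n \<Longrightarrow> Zt Q \<le> z"
  shows "card ((\<lambda>r f. if f \<in> C then val (fst T) r f else False) ` Delta T) \<le> (card C + 1) ^ z"
proof -
  let ?cs = "fst T"
  let ?kap = "\<lambda>r f. if f \<in> C then val ?cs r f else False"
  define \<sigma> where "\<sigma> r = {f \<in> C. val ?cs r f}" for r
  have wf: "wf_table T" by (rule closed_wf[OF A T])
  have finC: "finite C" using C finite_atts by (rule finite_subset)
  have "card (?kap ` Delta T) = card (\<sigma> ` Delta T)"
  proof (rule card_image_eq)
    fix x y
    have "?kap x = ?kap y \<longleftrightarrow> (\<forall>f\<in>C. val ?cs x f = val ?cs y f)"
    proof
      assume "?kap x = ?kap y"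
      thus "\<forall>f\<in>C. val ?cs x f = val ?cs y f" by (metis (full_types))
    qed auto
    moreover have "\<sigma> x = \<sigma> y \<longleftrightarrow> (\<forall>f\<in>C. val ?cs x f = val ?cs y f)" unfolding \<sigma>_def by blast
    ultimately show "?kap x = ?kap y \<longleftrightarrow> \<sigma> x = \<sigma> y" by simp
  qed
  also have "\<dots> \<le> card {S. S \<subseteq> C \<and> shat (\<sigma> ` Delta T) S}"
    by (rule pajor[OF finC]) (auto simp: \<sigma>_def)
  also have "\<dots> \<le> card {S. S \<subseteq> C \<and> card S \<le> z}"
  proof (rule card_mono)
    show "finite {S. S \<subseteq> C \<and> card S \<le> z}"
      by (rule finite_subset[of _ "Pow C"]) (use finC in auto)
    show "{S. S \<subseteq> C \<and> shat (\<sigma> ` Delta T) S} \<subseteq> {S. S \<subseteq> C \<and> card S \<le> z}"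
    proof
      fix S assume S: "S \<in> {S. S \<subseteq> C \<and> shat (\<sigma> ` Delta T) S}"
      show "S \<in> {S. S \<subseteq> C \<and> card S \<le> z}"
      proof (cases "S = {}")
        case True thus ?thesis by simp
      next
        case False
        have SC: "S \<subseteq> C" and sh: "(\<lambda>X. X \<inter> S) ` \<sigma> ` Delta T = Pow S" using S by (auto simp: shat_def)
        have Sa: "S \<subseteq> atts T" using SC C by blast
        define TS where "TS = J_op (\<lambda>_. {0}) (I_op (atts T - S) T)"
        note R = restrict_table[OF A T Sa False, folded TS_def]
        have "card (Delta TS) = card ((\<lambda>r. \<sigma> r \<inter> S) ` Delta T)"
        proof -
          have "card (projD ?cs (atts T - S) ` Delta T) = card ((\<lambda>r. \<sigma> r \<inter> S) ` Delta T)"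
          proof (rule card_image_eq)
            fix x y assume x: "x \<in> Delta T" and y: "y \<in> Delta T"
            have "projD ?cs (atts T - S) x = projD ?cs (atts T - S) y \<longleftrightarrow> (\<forall>f\<in>S \<inter> atts T. val ?cs x f = val ?cs y f)"
              by (rule projD_eq[OF wf x y])
            also have "\<dots> \<longleftrightarrow> \<sigma> x \<inter> S = \<sigma> y \<inter> S" using Sa SC unfolding \<sigma>_def by blast
            finally show "projD ?cs (atts T - S) x = projD ?cs (atts T - S) y \<longleftrightarrow> \<sigma> x \<inter> S = \<sigma> y \<inter> S" .
          qed
          thus ?thesis using R(5) by simp
        qed
        also have "(\<lambda>r. \<sigma> r \<inter> S) ` Delta T = Pow S" using sh by (simp add: image_image)
        finally have "card (Delta TS) = 2 ^ card S" using finC SC by (simp add: card_Pow finite_subset)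
        hence comp: "complete_table TS" using R(2,3) by (simp add: complete_table_def Nrows_card)
        have "TS \<in> tclosure TS" by (rule self_tclosure[OF R(3,4)])
        hence "card (atts TS) \<le> Zt TS" using comp by (rule Zt_ge)
        moreover have "m_psi \<psi> TS \<le> n" using R(2) SC Cn by (intro m_psi_le) auto
        ultimately have "card S \<le> z" using Zb[OF R(1)] R(2) by simp
        thus ?thesis using SC by simp
      qed
    qed
  qed
  also have "\<dots> \<le> (card C + 1) ^ z" by (rule count_small[OF finC])
  finally show ?thesis .
qed

lemma sat_proj:
  assumes wf: "wf_table T" and C: "C \<subseteq> atts T" and r: "r \<in> Delta T" and w: "\<And>x. x \<in> set w \<Longrightarrow> fst x \<in> C"
  shows "sat (map (\<lambda>i. fst T ! i) (keepD (fst T) (atts T - C))) (projD (fst T) (atts T - C) r) w \<longleftrightarrow> sat (fst T) r w"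
proof -
  have dist: "distinct (fst T)" using wfD(1)[OF wf] .
  have lr: "length r = length (fst T)" using Delta_len[OF wf r] .
  have "val (map (\<lambda>i. fst T ! i) (keepD (fst T) (atts T - C))) (projD (fst T) (atts T - C) r) (fst x) = val (fst T) r (fst x)"
    if "x \<in> set w" for x
    using val_I[OF dist lr, of "fst x" "atts T - C"] w[OF that] C by auto
  thus ?thesis unfolding sat_def by auto
qed

lemma gann_lemma:
  assumes A: "closed_class A" and psi: "bounded_cm \<psi>" and T: "T \<in> A" "\<not> is_empty T"
    and C: "C \<subseteq> atts T" and Cn: "\<And>f. f \<in> C \<Longrightarrow> \<psi> [f] \<le> n"
    and Gb: "\<And>Q. Q \<in> A \<Longrightarrow> m_psi \<psi> Q \<le> n \<Longrightarrow> Gt Q \<le> g"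
    and Gf: "\<And>Q. Q \<in> A \<Longrightarrow> m_psi \<psi> Q \<le> n \<Longrightarrow> finite {length \<alpha> | \<alpha>. irr_annihilating Q \<alpha>}"
    and s: "\<And>f. f \<notin> C \<Longrightarrow> \<not> s f" "s \<notin> (\<lambda>r f. if f \<in> C then val (fst T) r f else False) ` Delta T"
  shows "\<exists>\<gamma>. (\<forall>x\<in>set \<gamma>. fst x \<in> C \<and> snd x = s (fst x)) \<and> psiw \<psi> \<gamma> \<le> g * n \<and> (\<forall>r\<in>Delta T. \<not> sat (fst T) r \<gamma>)"
proof -
  let ?cs = "fst T"
  have wf: "wf_table T" by (rule closed_wf[OF A T(1)])
  have finC: "finite C" using C finite_atts by (rule finite_subset)
  obtain cl where cl: "set cl = C" using finite_list[OF finC] by blast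
  define Ws where "Ws = map (\<lambda>f. (f, s f)) cl"
  have noRow: "\<not> sat ?cs r Ws" if r: "r \<in> Delta T" for r
  proof
    assume sat: "sat ?cs r Ws"
    have "(\<lambda>f. if f \<in> C then val ?cs r f else False) = s"
    proof
      fix f show "(if f \<in> C then val ?cs r f else False) = s f"
      proof (cases "f \<in> C")
        case True
        hence "(f, s f) \<in> set Ws" using cl by (auto simp: Ws_def)
        thus ?thesis using sat True by (auto simp: sat_def)
      next
        case False thus ?thesis using s(1) by simp
      qed
    qed
    thus False using s(2) r by blast
  qed
  have CnE: "C \<noteq> {}"
  proof
    assume "C = {}"
    hence "Ws = []" using cl by (simp add: Ws_def)
    moreover obtain r where "r \<in> Delta T" using T(2) by (auto simp: is_empty_iff)
    ultimately show False using noRow by simp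
  qed
  define P where "P \<gamma> \<longleftrightarrow> set \<gamma> \<subseteq> set Ws \<and> (\<forall>r\<in>Delta T. \<not> sat ?cs r \<gamma>)" for \<gamma>
  have PWs: "P Ws" using noRow by (simp add: P_def)
  obtain \<gamma> where g1: "P \<gamma>" and g2: "\<And>\<gamma>'. P \<gamma>' \<Longrightarrow> length \<gamma> \<le> length \<gamma>'"
    using ex_has_least_nat[of P Ws length] PWs by blast
  have lett: "\<forall>x\<in>set \<gamma>. fst x \<in> C \<and> snd x = s (fst x)" using g1 cl by (auto simp: P_def Ws_def)
  define T2 where "T2 = J_op (\<lambda>_. {0}) (I_op (atts T - C) T)"
  note R = restrict_table[OF A T(1) C CnE, folded T2_def]
  have naI: "\<not> atts T \<subseteq> atts T - C" using C CnE by auto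
  have fT2: "fst T2 = map (\<lambda>i. ?cs ! i) (keepD ?cs (atts T - C))" unfolding T2_def using fst_I[OF naI] by simp
  have emp_iff: "Delta (sub T2 w) = {} \<longleftrightarrow> (\<forall>r\<in>Delta T. \<not> sat ?cs r w)" if w: "\<And>x. x \<in> set w \<Longrightarrow> fst x \<in> C" for w
  proof -
    have "Delta (sub T2 w) = {r'' \<in> projD ?cs (atts T - C) ` Delta T. sat (fst T2) r'' w}"
      using R(5) by (simp add: Delta_sub)
    thus ?thesis using sat_proj[OF wf C _ w] fT2 by auto
  qed
  have irr: "irr_annihilating T2 \<gamma>"
    unfolding irr_annihilating_def
  proof (intro conjI notI)
    have wd: "\<gamma> \<in> words T2" using lett R(2) by (auto simp: words_def)
    have em: "is_empty (sub T2 \<gamma>)" using emp_iff[of \<gamma>] lett g1 by (auto simp: is_empty_iff P_def)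
    have nc: "\<not> (\<exists>f \<delta> \<sigma>. (f, \<delta>) \<in> set \<gamma> \<and> (f, \<sigma>) \<in> set \<gamma> \<and> \<delta> \<noteq> \<sigma>)"
    proof
      assume "\<exists>f \<delta> \<sigma>. (f, \<delta>) \<in> set \<gamma> \<and> (f, \<sigma>) \<in> set \<gamma> \<and> \<delta> \<noteq> \<sigma>"
      then obtain f \<delta> \<sigma> where fd: "(f, \<delta>) \<in> set \<gamma>" "(f, \<sigma>) \<in> set \<gamma>" "\<delta> \<noteq> \<sigma>" by blast
      have "\<delta> = s f" "\<sigma> = s f" using lett fd(1,2) by force+
      thus False using fd(3) by simp
    qed
    show "annihilating T2 \<gamma>" using wd em nc by (simp add: annihilating_def)
    assume "\<exists>I. I \<subset> {..<length \<gamma>} \<and> annihilating T2 (nths \<gamma> I)"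
    then obtain I where I: "I \<subset> {..<length \<gamma>}" "annihilating T2 (nths \<gamma> I)" by blast
    have ss: "set (nths \<gamma> I) \<subseteq> set \<gamma>" by (rule set_nths_subset)
    have lI: "\<And>x. x \<in> set (nths \<gamma> I) \<Longrightarrow> fst x \<in> C" using ss lett by auto
    have "Delta (sub T2 (nths \<gamma> I)) = {}" using I(2) by (simp add: annihilating_def is_empty_iff)
    hence "\<forall>r\<in>Delta T. \<not> sat ?cs r (nths \<gamma> I)" using emp_iff[OF lI] by simp
    hence "P (nths \<gamma> I)" using ss g1 by (auto simp: P_def)
    hence le: "length \<gamma> \<le> length (nths \<gamma> I)" by (rule g2)
    have "{i. i < length \<gamma> \<and> i \<in> I} = I" using I(1) by auto
    hence "length (nths \<gamma> I) = card I" by (simp add: length_nths)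
    also have "\<dots> < card {..<length \<gamma>}" by (rule psubset_card_mono[OF _ I(1)]) simp
    finally show False using le by simp
  qed
  have mT2: "m_psi \<psi> T2 \<le> n" using R(2) Cn by (intro m_psi_le) auto
  have neT2: "\<not> is_empty T2" using R(5) T(2) by (auto simp: is_empty_iff)
  have "length \<gamma> \<le> Gt T2" by (rule Gt_ge[OF neT2 Gf[OF R(1) mT2] irr])
  also have "\<dots> \<le> g" by (rule Gb[OF R(1) mT2])
  finally have lg: "length \<gamma> \<le> g" .
  have "psiw \<psi> \<gamma> \<le> length (map fst \<gamma>) * n" unfolding psiw_def
    by (rule psi_sum[OF psi]) (use lett Cn in auto)
  also have "\<dots> \<le> g * n" using lg by simp
  finally show ?thesis using lett g1 by (auto simp: P_def)
qed

lemma pow_aux: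
  fixes K z :: nat assumes "1 \<le> K" "1 \<le> z"
  shows "2 * (K + 1) ^ z \<le> (4 * K) ^ z"
proof -
  have "(2::nat) ^ 1 \<le> 2 ^ z" by (rule power_increasing[OF assms(2)]) simp
  hence "(2::nat) \<le> 2 ^ z" by simp
  moreover have "(K + 1) ^ z \<le> (2 * K) ^ z" using assms(1) by (intro power_mono) auto
  ultimately have "2 * (K + 1) ^ z \<le> 2 ^ z * (2 * K) ^ z" by (rule mult_mono) simp_all
  also have "\<dots> = (2 * (2 * K)) ^ z" by (rule power_mult_distrib[symmetric])
  also have "\<dots> = (4 * K) ^ z" by simp
  finally show ?thesis .
qed

lemma arith_bound:
  fixes N0 K z n l k :: nat
  assumes N1: "1 \<le> N0" and NK: "N0 \<le> (K+1)^z" and Kn: "K \<le> n*l" and n1: "1 \<le> n" and l1: "1 \<le> l"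
    and Nk: "N0 \<le> 2^k" and mink: "k \<noteq> 0 \<Longrightarrow> \<not> N0 \<le> 2^(k-1)"
  shows "real k \<le> real z * log 2 (4 * real n * real l)"
proof (cases "k = 0")
  case True
  have "1 * 1 \<le> real n * real l" by (rule mult_mono) (use n1 l1 in auto)
  hence "1 \<le> 4 * real n * real l" by linarith
  hence "0 \<le> log 2 (4 * real n * real l)" by (subst zero_le_log_cancel_iff) (use n1 l1 in auto)
  thus ?thesis using True by simp
next
  case False
  have lt: "2^(k-1) < N0" using mink[OF False] by simp
  hence k2: "2^k \<le> 2 * N0" using False by (cases k) auto
  have "1 \<le> (2::nat)^(k-1)" by simp
  hence N2: "2 \<le> N0" using lt by linarith
  have z1: "1 \<le> z"
  proof (rule ccontr)
    assume "\<not> 1 \<le> z" hence "z = 0" by simp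
    thus False using NK N2 by simp
  qed
  have K1: "1 \<le> K"
  proof (rule ccontr)
    assume "\<not> 1 \<le> K" hence "K = 0" by simp
    thus False using NK N2 by simp
  qed
  have "2^k \<le> 2 * (K + 1) ^ z" using k2 NK by linarith
  also have "\<dots> \<le> (4 * K) ^ z" by (rule pow_aux[OF K1 z1])
  also have "\<dots> \<le> (4 * (n * l)) ^ z" using Kn by (intro power_mono) auto
  finally have nat: "2^k \<le> (4 * (n * l)) ^ z" .
  hence re: "real (2^k) \<le> real ((4 * (n * l)) ^ z)" by (simp only: of_nat_le_iff)
  have pos: "0 < 4 * real n * real l" using n1 l1 by simp
  have re': "2 ^ k \<le> (4 * real n * real l) ^ z" using re by (simp add: mult.assoc)
  have pz: "0 < (4 * real n * real l) ^ z" using pos by simp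
  have "real k = log 2 (2 ^ k)" by simp
  also have "\<dots> \<le> log 2 ((4 * real n * real l) ^ z)"
    using re' pz by (subst log_le_cancel_iff) auto
  also have "\<dots> = real z * log 2 (4 * real n * real l)" using pos by (simp add: log_nat_power)
  finally show ?thesis .
qed

lemma main_T:
  assumes A: "closed_class A" and psi: "bounded_cm \<psi>" and n0: "n \<noteq> 0"
    and T: "T \<in> A" and Ta: "psi_a \<psi> T \<le> n"
    and Zb: "\<And>Q. Q \<in> A \<Longrightarrow> m_psi \<psi> Q \<le> n \<Longrightarrow> Zt Q \<le> z"
    and Gb: "\<And>Q. Q \<in> A \<Longrightarrow> m_psi \<psi> Q \<le> n \<Longrightarrow> Gt Q \<le> g"
    and Gf: "\<And>Q. Q \<in> A \<Longrightarrow> m_psi \<psi> Q \<le> n \<Longrightarrow> finite {length \<alpha> | \<alpha>. irr_annihilating Q \<alpha>}"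
    and Lb: "\<And>Q. Q \<in> A \<Longrightarrow> l_psi \<psi> Q n \<le> l"
    and l1: "1 \<le> l"
  shows "real (psi_d \<psi> T) \<le> real (max n (n * g)) * real z * log 2 (4 * real n * real l)"
proof -
  have RHS0: "0 \<le> real (max n (n * g)) * real z * log 2 (4 * real n * real l)"
  proof -
    have "1 * 1 \<le> real n * real l" by (rule mult_mono) (use n0 l1 in auto)
    hence "1 \<le> 4 * real n * real l" by linarith
    hence "0 \<le> log 2 (4 * real n * real l)" by (subst zero_le_log_cancel_iff) (use n0 l1 in auto)
    thus ?thesis by simp
  qed
  show ?thesis
  proof (cases "is_empty T")
    case True thus ?thesis using RHS0 by (simp add: psi_d_def)
  next
    case ne: False
    let ?cs = "fst T"
    have wf: "wf_table T" by (rule closed_wf[OF A T])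
    obtain \<Gamma> where \<Gamma>: "nd_tree T \<Gamma>" "psi_a \<psi> T = psi_tree \<psi> \<Gamma>" using psi_a_att[OF wf ne] by blast
    define U0 where "U0 = {w. (\<exists>d. cpath \<Gamma> w d) \<and> \<not> is_empty (sub T w)}"
    have U0fin: "finite U0" by (rule finite_subset[OF _ finite_cpaths[of \<Gamma>]]) (auto simp: U0_def)
    have U0c: "psiw \<psi> w \<le> n" if wU: "w \<in> U0" for w
    proof -
      obtain d where "cpath \<Gamma> w d" using wU by (auto simp: U0_def)
      hence "psiw \<psi> w \<le> psi_tree \<psi> \<Gamma>" by (rule psi_tree_ge)
      thus ?thesis using \<Gamma>(2) Ta by simp
    qed
    have U0w: "w \<in> words T" if wU: "w \<in> U0" for w
    proof -
      obtain d t where t: "t \<in> set \<Gamma>" "dpath t w d" using wU by (auto simp: U0_def cpath_def)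
      have "f \<in> atts T" if "(f, \<delta>) \<in> set w" for f \<delta>
      proof -
        have "att_in t f" by (rule dpath_att[OF t(2) that])
        hence "f \<in> tree_atts \<Gamma>" using t(1) by (auto simp: tree_atts_def)
        thus ?thesis using \<Gamma>(1) by (auto simp: nd_tree_def)
      qed
      thus ?thesis by (force simp: words_def)
    qed
    have U0pi: "PiT (sub T w) \<noteq> {}" if wU: "w \<in> U0" for w
    proof -
      obtain d where d: "cpath \<Gamma> w d" "\<not> is_empty (sub T w)" using wU by (auto simp: U0_def)
      hence "d \<in> PiT (sub T w)" using \<Gamma>(1) unfolding nd_tree_def by blast
      thus ?thesis by blast
    qed
    have U0cov: "\<exists>w\<in>U0. sat ?cs r w" if rD: "r \<in> Delta T" for r
    proof -
      obtain w d where "cpath \<Gamma> w d" "r \<in> Delta (sub T w)" using \<Gamma>(1) rD unfolding nd_tree_def by blast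
      moreover hence "\<not> is_empty (sub T w)" by (auto simp: is_empty_iff)
      ultimately show ?thesis by (auto simp: U0_def Delta_sub)
    qed
    define P where "P V \<longleftrightarrow> V \<subseteq> U0 \<and> psi_cover \<psi> T n V" for V
    have PU0: "P U0" unfolding P_def psi_cover_def
      using U0fin U0c U0w U0cov by (auto simp: Delta_sub)
    obtain U where U: "P U" and Umin: "\<And>V. P V \<Longrightarrow> card U \<le> card V"
      using ex_has_least_nat[of P U0 card] PU0 by blast
    have UU0: "U \<subseteq> U0" and Ucov': "psi_cover \<psi> T n U" using U by (auto simp: P_def)
    have Ufin: "finite U" using Ucov' by (simp add: psi_cover_def)
    have irrU: "irr_psi_cover \<psi> T n U"
    proof -
      have "\<not> psi_cover \<psi> T n V" if "V \<subset> U" for V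
      proof
        assume "psi_cover \<psi> T n V"
        hence "P V" using that UU0 by (auto simp: P_def)
        hence "card U \<le> card V" by (rule Umin)
        moreover have "card V < card U" by (rule psubset_card_mono[OF Ufin that])
        ultimately show False by simp
      qed
      thus ?thesis using Ucov' by (simp add: irr_psi_cover_def)
    qed
    have cU: "card U \<le> l" using l_psi_ge[OF psi ne irrU] Lb[OF T] by simp
    have Ucov: "\<exists>\<alpha>\<in>U. sat ?cs r \<alpha>" if "r \<in> Delta T" for r
    proof -
      have "r \<in> (\<Union>\<alpha>\<in>U. Delta (sub T \<alpha>))" using Ucov' that by (simp add: psi_cover_def)
      thus ?thesis by (auto simp: Delta_sub)
    qed
    define C where "C = (\<Union>\<alpha>\<in>U. fst ` set \<alpha>)"
    have Csub: "C \<subseteq> atts T" using U0w UU0 by (force simp: C_def words_def)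
    have Cn: "\<psi> [f] \<le> n" if fC: "f \<in> C" for f
    proof -
      obtain \<alpha> where a: "\<alpha> \<in> U" "f \<in> fst ` set \<alpha>" using fC by (auto simp: C_def)
      have "\<psi> [f] \<le> \<psi> (map fst \<alpha>)" using a(2) by (intro psi_single[OF psi]) auto
      also have "\<dots> \<le> n" using U0c a(1) UU0 by (auto simp: psiw_def)
      finally show ?thesis .
    qed
    have cC: "card C \<le> n * l"
    proof -
      have "card C \<le> (\<Sum>\<alpha>\<in>U. card (fst ` set \<alpha>))" unfolding C_def by (rule card_UN_le[OF Ufin])
      also have "\<dots> \<le> (\<Sum>\<alpha>\<in>U. n)"
      proof (rule sum_mono)
        fix \<alpha> assume a: "\<alpha> \<in> U"
        have "card (fst ` set \<alpha>) \<le> card (set \<alpha>)" by (rule card_image_le) simp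
        also have "\<dots> \<le> length \<alpha>" by (rule card_length)
        also have "\<dots> \<le> psiw \<psi> \<alpha>" by (rule psiw_len[OF psi])
        also have "\<dots> \<le> n" using U0c a UU0 by auto
        finally show "card (fst ` set \<alpha>) \<le> n" .
      qed
      also have "\<dots> = card U * n" by simp
      also have "\<dots> \<le> l * n" using cU by simp
      finally show ?thesis by (simp add: mult.commute)
    qed
    define c where "c = max n (n * g)"
    have loc: "cst T \<psi> C U c"
    proof
      show "wf_table T" by (rule wf)
      show "bounded_cm \<psi>" by (rule psi)
      show "fst x \<in> C" if "\<alpha> \<in> U" "x \<in> set \<alpha>" for \<alpha> x using that by (auto simp: C_def)
      show "psiw \<psi> \<alpha> \<le> c" if aU: "\<alpha> \<in> U" for \<alpha>
      proof -
        have "psiw \<psi> \<alpha> \<le> n" using U0c aU UU0 by blast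
        thus ?thesis by (simp add: c_def)
      qed
      show "PiT (sub T \<alpha>) \<noteq> {}" if "\<alpha> \<in> U" for \<alpha> using U0pi that UU0 by auto
      show "\<exists>\<alpha>\<in>U. sat ?cs r \<alpha>" if "r \<in> Delta T" for r using Ucov[OF that] .
      show "\<exists>\<gamma>. (\<forall>x\<in>set \<gamma>. fst x \<in> C \<and> snd x = s (fst x)) \<and> psiw \<psi> \<gamma> \<le> c \<and> (\<forall>r\<in>Delta T. \<not> sat ?cs r \<gamma>)"
        if sA: "\<And>f. f \<notin> C \<Longrightarrow> \<not> s f" "s \<notin> (\<lambda>r f. if f \<in> C then val ?cs r f else False) ` Delta T" for s
      proof -
        obtain \<gamma> where "(\<forall>x\<in>set \<gamma>. fst x \<in> C \<and> snd x = s (fst x))" "psiw \<psi> \<gamma> \<le> g * n" "(\<forall>r\<in>Delta T. \<not> sat ?cs r \<gamma>)"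
          using gann_lemma[OF A psi T ne Csub Cn Gb Gf sA] by blast
        moreover have "g * n \<le> c" by (simp add: c_def mult.commute)
        ultimately show ?thesis by (intro exI[of _ \<gamma>]) auto
      qed
    qed
    interpret cst T \<psi> C U c by (rule loc)
    define N0 where "N0 = card (kap ` Delta T)"
    have kapeq: "kap = (\<lambda>r f. if f \<in> C then val ?cs r f else False)" by (simp add: kap_def[abs_def])
    have NK: "N0 \<le> (card C + 1) ^ z"
      unfolding N0_def kapeq by (rule classes_bound[where \<psi>=\<psi> and n=n and z=z, OF A T Csub Cn Zb])
    have N1: "1 \<le> N0"
    proof -
      obtain r where "r \<in> Delta T" using ne by (auto simp: is_empty_iff)
      hence "kap ` Delta T \<noteq> {}" by blast
      moreover have "finite (kap ` Delta T)" using Delta_finite by simp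
      ultimately show ?thesis unfolding N0_def by (simp add: Suc_le_eq card_gt_0_iff)
    qed
    define k where "k = (LEAST k. N0 \<le> 2 ^ k)"
    have Nk: "N0 \<le> 2 ^ k" unfolding k_def by (rule LeastI[of _ N0]) (rule less_imp_le[OF less_exp])
    have mink: "\<not> N0 \<le> 2 ^ (k - 1)" if "k \<noteq> 0"
    proof
      assume "N0 \<le> 2 ^ (k - 1)"
      hence "k \<le> k - 1" unfolding k_def by (rule Least_le)
      thus False using that by simp
    qed
    have "Rw [] = Delta T" by (simp add: Rw_def)
    hence "card (kap ` Rw []) \<le> 2 ^ k" using Nk by (simp add: N0_def)
    then obtain t where t: "good [] k t" using good_all by blast
    have tp: "wf_dt t" "det_dt t" "\<forall>g. att_in t g \<longrightarrow> g \<in> C"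
      "\<forall>w d. dpath t w d \<longrightarrow> psiw \<psi> w \<le> k * c \<and> (Rw w = {} \<or> d \<in> PiT (sub T w))"
      "\<forall>r\<in>Rw []. \<exists>w d. dpath t w d \<and> sat ?cs r w"
      using t unfolding good_def by auto
    have det: "det_tree T [t]"
      unfolding det_tree_def nd_tree_def two_tree_def
    proof (intro conjI ballI allI impI)
      show "[t] \<noteq> []" by simp
      show "wf_dt t'" if "t' \<in> set [t]" for t' using that tp(1) by simp
      show "tree_atts [t] \<subseteq> atts T" using tp(3) Csub by (auto simp: tree_atts_single)
      show "\<exists>w d. cpath [t] w d \<and> r \<in> Delta (sub T w)" if rD: "r \<in> Delta T" for r
      proof -
        have "r \<in> Rw []" using rD by (simp add: Rw_def)
        then obtain w d where "dpath t w d" "sat ?cs r w" using tp(5) by blast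
        thus ?thesis using rD by (auto simp: cpath_single Delta_sub)
      qed
      show "is_empty (sub T w) \<or> d \<in> PiT (sub T w)" if "cpath [t] w d" for w d
        using tp(4) that by (auto simp: cpath_single Rw_sub is_empty_iff)
      show "det_dt t'" if "t' \<in> set [t]" for t' using that tp(2) by simp
    qed simp
    have "psi_d \<psi> T \<le> psi_tree \<psi> [t]" by (rule psi_d_le[OF det])
    also have "\<dots> \<le> k * c"
      by (rule psi_tree_le) (use det tp(4) in \<open>auto simp: det_tree_def nd_tree_def cpath_single\<close>)
    finally have pd: "psi_d \<psi> T \<le> k * c" .
    have "real k \<le> real z * log 2 (4 * real n * real l)"
      by (rule arith_bound[OF N1 NK cC _ l1 Nk mink]) (use n0 in simp)
    hence "real k * real c \<le> real z * log 2 (4 * real n * real l) * real c" by (rule mult_right_mono) simp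
    moreover have "real (psi_d \<psi> T) \<le> real k * real c" using pd by (metis of_nat_le_iff of_nat_mult)
    ultimately show ?thesis by (simp add: c_def mult_ac)
  qed
qed

lemma mif: "finite S \<Longrightarrow> max_if_finite S = Some (Max S)" by (simp add: max_if_finite_def)

lemma bounded_fin: "(\<And>x. x \<in> S \<Longrightarrow> x \<le> (B::nat)) \<Longrightarrow> finite S"
  by (rule finite_subset[of _ "{..B}"]) auto

theorem lemma16:
  fixes A :: "dtable set" and \<psi> :: "nat list \<Rightarrow> nat" and n :: nat
  assumes "closed_class A" and "nontrivial A" and "bounded_cm \<psi>"
    and "\<forall>k. H_class \<psi> A k \<noteq> None"
    and "n \<noteq> 0"
  shows "\<exists>z g l h. Z_class \<psi> A n = Some z \<and> G_class \<psi> A n = Some g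
           \<and> L_class \<psi> A n = Some l \<and> H_class \<psi> A n = Some h
           \<and> real h \<le> real (max n (n * g)) * real z * log 2 (4 * real n * real l)"
proof -
  note A = assms(1) and nt = assms(2) and psi = assms(3) and H = assms(4) and n0 = assms(5)
  obtain Bg where Bg: "\<forall>x\<in>{length \<alpha> | Q \<alpha>. Q \<in> A \<and> m_psi \<psi> Q \<le> n \<and> irr_annihilating Q \<alpha>}. x \<le> Bg"
  proof -
    have "\<exists>B. \<forall>x\<in>{length \<alpha> | Q \<alpha>. Q \<in> A \<and> m_psi \<psi> Q \<le> n \<and> irr_annihilating Q \<alpha>}. x \<le> B"
    proof (rule bounded_by_H[OF H])
      fix x assume "x \<in> {length \<alpha> | Q \<alpha>. Q \<in> A \<and> m_psi \<psi> Q \<le> n \<and> irr_annihilating Q \<alpha>}"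
      then obtain Q \<alpha> where Q: "Q \<in> A" "m_psi \<psi> Q \<le> n" "irr_annihilating Q \<alpha>" "x = length \<alpha>" by blast
      show "\<exists>T'\<in>A. psi_a \<psi> T' \<le> n \<and> x \<le> 2 ^ psi_d \<psi> T'" using G_core[OF A psi Q(1-3)] Q(4) by simp
    qed
    thus ?thesis using that by blast
  qed
  have Glen: "length \<alpha> \<le> Bg" if "Q \<in> A" "m_psi \<psi> Q \<le> n" "irr_annihilating Q \<alpha>" for Q \<alpha>
    using Bg that by blast
  have Gf: "finite {length \<alpha> | \<alpha>. irr_annihilating Q \<alpha>}" if "Q \<in> A" "m_psi \<psi> Q \<le> n" for Q
    by (rule bounded_fin[of _ Bg]) (use Glen that in blast)
  have GtB: "Gt Q \<le> Bg" if "Q \<in> A" "m_psi \<psi> Q \<le> n" for Q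
    by (rule Gt_le) (use Glen that in blast)
  obtain Bz where Bz: "\<forall>x\<in>{card (atts Q) - 1 | Q. Q \<in> A \<and> m_psi \<psi> Q \<le> n \<and> complete_table Q \<and> 2 \<le> card (atts Q)}. x \<le> Bz"
  proof -
    have "\<exists>B. \<forall>x\<in>{card (atts Q) - 1 | Q. Q \<in> A \<and> m_psi \<psi> Q \<le> n \<and> complete_table Q \<and> 2 \<le> card (atts Q)}. x \<le> B"
    proof (rule bounded_by_H[OF H])
      fix x assume "x \<in> {card (atts Q) - 1 | Q. Q \<in> A \<and> m_psi \<psi> Q \<le> n \<and> complete_table Q \<and> 2 \<le> card (atts Q)}"
      then obtain Q where Q: "Q \<in> A" "m_psi \<psi> Q \<le> n" "complete_table Q" "2 \<le> card (atts Q)" "x = card (atts Q) - 1" by blast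
      show "\<exists>T'\<in>A. psi_a \<psi> T' \<le> 2 * n \<and> x \<le> 2 ^ psi_d \<psi> T'" using Z_core[OF A psi Q(1-4)] Q(5) by simp
    qed
    thus ?thesis using that by blast
  qed
  have ZtB: "Zt T \<le> Suc Bz" if T: "T \<in> A" "m_psi \<psi> T \<le> n" for T
  proof -
    consider "Zt T = 0" | Q where "Q \<in> tclosure T" "complete_table Q" "Zt T = card (atts Q)" using Zt_cases[of T] by (elim disjE bexE conjE) auto
    thus ?thesis
    proof cases
      case 1 thus ?thesis by simp
    next
      case 2
      have QA: "Q \<in> A" using 2(1) T(1) A by (auto simp: closed_class_def cclosure_def)
      have "m_psi \<psi> Q \<le> n"
      proof (rule m_psi_le)
        fix f assume "f \<in> atts Q"
        hence "f \<in> atts T" using atts_tclosure[OF 2(1)] by blast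
        thus "\<psi> [f] \<le> n" using m_psi_ge[of f T \<psi>] T(2) by simp
      qed
      show ?thesis
      proof (cases "2 \<le> card (atts Q)")
        case True
        hence "card (atts Q) - 1 \<le> Bz" using Bz QA \<open>m_psi \<psi> Q \<le> n\<close> 2(2) by blast
        thus ?thesis using 2(3) by simp
      next
        case False thus ?thesis using 2(3) by simp
      qed
    qed
  qed
  obtain Bl where Bl: "\<forall>x\<in>{card U | T U. T \<in> A \<and> irr_psi_cover \<psi> T n U}. x \<le> Bl"
  proof -
    have "\<exists>B. \<forall>x\<in>{card U | T U. T \<in> A \<and> irr_psi_cover \<psi> T n U}. x \<le> B"
    proof (rule bounded_by_H[OF H])
      fix x assume "x \<in> {card U | T U. T \<in> A \<and> irr_psi_cover \<psi> T n U}"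
      then obtain T U where TU: "T \<in> A" "irr_psi_cover \<psi> T n U" "x = card U" by blast
      show "\<exists>T'\<in>A. psi_a \<psi> T' \<le> n \<and> x \<le> 2 ^ psi_d \<psi> T'" using L_core[OF A psi TU(1,2)] TU(3) by simp
    qed
    thus ?thesis using that by blast
  qed
  have lB: "l_psi \<psi> T n \<le> Bl" if "T \<in> A" for T
    by (rule l_psi_le[OF psi]) (use Bl that in blast)
  have finZ: "finite (Zt ` A_psi \<psi> A n)" by (rule bounded_fin[of _ "Suc Bz"]) (auto simp: A_psi_def intro: ZtB)
  have finG: "finite (Gt ` A_psi \<psi> A n)" by (rule bounded_fin[of _ Bg]) (auto simp: A_psi_def intro: GtB)
  have finL: "finite ((\<lambda>T. l_psi \<psi> T n) ` A)" by (rule bounded_fin[of _ Bl]) (auto intro: lB)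
  have finH: "finite (psi_d \<psi> ` {T \<in> A. psi_a \<psi> T \<le> n})"
  proof -
    have "H_class \<psi> A n \<noteq> None" using H by blast
    thus ?thesis unfolding H_class_def max_if_finite_def by (simp split: if_splits)
  qed
  define z where "z = Max (Zt ` A_psi \<psi> A n)"
  define g where "g = Max (Gt ` A_psi \<psi> A n)"
  define l where "l = Max ((\<lambda>T. l_psi \<psi> T n) ` A)"
  define h where "h = Max (psi_d \<psi> ` {T \<in> A. psi_a \<psi> T \<le> n})"
  have Zb: "Zt Q \<le> z" if "Q \<in> A" "m_psi \<psi> Q \<le> n" for Q
    unfolding z_def by (rule Max_ge[OF finZ]) (use that in \<open>auto simp: A_psi_def\<close>)
  have Gb: "Gt Q \<le> g" if "Q \<in> A" "m_psi \<psi> Q \<le> n" for Q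
    unfolding g_def by (rule Max_ge[OF finG]) (use that in \<open>auto simp: A_psi_def\<close>)
  have Lb: "l_psi \<psi> Q n \<le> l" if "Q \<in> A" for Q
    unfolding l_def by (rule Max_ge[OF finL]) (use that in auto)
  have l1: "1 \<le> l"
  proof -
    obtain T0 where T0: "T0 \<in> A" "\<not> is_empty T0" using nt by (auto simp: nontrivial_def)
    have "1 \<le> l_psi \<psi> T0 n" by (rule l_psi_pos[OF psi T0(2)])
    also have "\<dots> \<le> l" by (rule Lb[OF T0(1)])
    finally show ?thesis .
  qed
  have "Lam \<in> {T \<in> A. psi_a \<psi> T \<le> n}" using Lam_in[OF A] psi_a_Lam[of \<psi>] by simp
  hence Hne: "psi_d \<psi> ` {T \<in> A. psi_a \<psi> T \<le> n} \<noteq> {}" by blast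
  have "h \<in> psi_d \<psi> ` {T \<in> A. psi_a \<psi> T \<le> n}" unfolding h_def by (rule Max_in[OF finH Hne])
  then obtain T where T: "T \<in> A" "psi_a \<psi> T \<le> n" "h = psi_d \<psi> T" by blast
  have bound: "real h \<le> real (max n (n * g)) * real z * log 2 (4 * real n * real l)"
    using main_T[OF A psi n0 T(1,2) Zb Gb Gf Lb l1] T(3) by simp
  show ?thesis
    using bound mif[OF finZ] mif[OF finG] mif[OF finL] mif[OF finH]
    unfolding Z_class_def G_class_def L_class_def H_class_def z_def g_def l_def h_def by blast
qed

end
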